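(* For any abstract unsigned GKM$_3$ graph $\Gamma$, the poset $S_2(\Gamma)$ of faces of $\Gamma$ of valence at most $2$, ordered by inclusion, is the cell poset of a regular CW complex.
   Context: Graphs are finite, connected, $n$-valent, without loops, with oriented edges $e$ (initial vertex $i(e)$, terminal $t(e)$, reverse $\overline e$). An abstract unsigned GKM graph with $T$-labeling consists of such a graph, a connection $\nabla$ (bijections $\nabla_e$ from edges at $i(e)$ to edges at $t(e)$ with $\nabla_e e=\overline e$, $\nabla_{\overline e}=\nabla_e^{-1}$) and $\alpha\colon E\to H^2(BT;\mathbb Z)/\{\pm1\}$ with $\alpha(\overline e)=\alpha(e)$, $\alpha(\nabla_e e')\equiv\pm\alpha(e')\bmod \alpha(e)$ for edges $e,e'$ with common origin, and values spanning $H^2(BT;\mathbb Z)$. It is GKM$_3$ if at every vertex any at most $3$ pairwise distinct values $\alpha(e)$, $i(e)=v$, are linearly independent. A face of valence $i$ is a connected $i$-valent subgraph invariant under the connection along its edges (for an edge $e$ of the face, $\nabla_e$ maps edges of the face at $i(e)$ to edges of the face at $t(e)$); $0$-faces are vertices, $1$-faces are edges. *)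

theory Defs
  imports "HOL-Analysis.Analysis"
begin

text \<open>H^2(BT;Z) is modelled as the lattice 'k => int for a finite index type 'k
  (T a torus of rank CARD('k)); alpha picks a representative of the class in
  H^2(BT;Z)/{+-1}, all conditions being stated up to sign.\<close>

definition out_edges :: "'e set \<Rightarrow> ('e \<Rightarrow> 'v) \<Rightarrow> 'v \<Rightarrow> 'e set" where
  "out_edges E src v = {e \<in> E. src e = v}"

definition edge_rel :: "'e set \<Rightarrow> ('e \<Rightarrow> 'v) \<Rightarrow> ('e \<Rightarrow> 'v) \<Rightarrow> ('v \<times> 'v) set" where
  "edge_rel F src tgt = {(src e, tgt e) | e. e \<in> F}"

definition connected_on :: "'v set \<Rightarrow> 'e set \<Rightarrow> ('e \<Rightarrow> 'v) \<Rightarrow> ('e \<Rightarrow> 'v) \<Rightarrow> bool" where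
  "connected_on W F src tgt \<longleftrightarrow> W \<noteq> {} \<and>
     (\<forall>x\<in>W. \<forall>y\<in>W. (x, y) \<in> (edge_rel F src tgt)\<^sup>*)"

definition eq_pm :: "('k \<Rightarrow> int) \<Rightarrow> ('k \<Rightarrow> int) \<Rightarrow> bool" where
  "eq_pm a b \<longleftrightarrow> a = b \<or> a = - b"

definition cong_pm_mod :: "('k \<Rightarrow> int) \<Rightarrow> ('k \<Rightarrow> int) \<Rightarrow> ('k \<Rightarrow> int) \<Rightarrow> bool" where
  "cong_pm_mod b' b a \<longleftrightarrow> (\<exists>c::int. b' = (\<lambda>j. b j + c * a j) \<or> b' = (\<lambda>j. - b j + c * a j))"

definition int_lin_indep :: "'e set \<Rightarrow> ('e \<Rightarrow> ('k \<Rightarrow> int)) \<Rightarrow> bool" where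
  "int_lin_indep S f \<longleftrightarrow>
     (\<forall>c :: 'e \<Rightarrow> int. (\<lambda>j. \<Sum>e\<in>S. c e * f e j) = (\<lambda>j. 0) \<longrightarrow> (\<forall>e\<in>S. c e = 0))"

definition int_spans :: "'e set \<Rightarrow> ('e \<Rightarrow> ('k \<Rightarrow> int)) \<Rightarrow> bool" where
  "int_spans S f \<longleftrightarrow> (\<forall>x :: 'k \<Rightarrow> int. \<exists>c :: 'e \<Rightarrow> int. x = (\<lambda>j. \<Sum>e\<in>S. c e * f e j))"

definition abstract_gkm_graph ::
  "'v set \<Rightarrow> 'e set \<Rightarrow> ('e \<Rightarrow> 'v) \<Rightarrow> ('e \<Rightarrow> 'v) \<Rightarrow> ('e \<Rightarrow> 'e) \<Rightarrow> nat
   \<Rightarrow> ('e \<Rightarrow> 'e \<Rightarrow> 'e) \<Rightarrow> ('e \<Rightarrow> ('k::finite \<Rightarrow> int)) \<Rightarrow> bool" where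
  "abstract_gkm_graph V E src tgt rv n nabla alpha \<longleftrightarrow>
     \<comment> \<open>finite, connected, n-valent graph without loops, with oriented edges\<close>
     finite V \<and> finite E \<and>
     (\<forall>e\<in>E. src e \<in> V \<and> tgt e \<in> V \<and> src e \<noteq> tgt e \<and>
        rv e \<in> E \<and> rv (rv e) = e \<and> src (rv e) = tgt e \<and> tgt (rv e) = src e) \<and>
     connected_on V E src tgt \<and>
     (\<forall>v\<in>V. card (out_edges E src v) = n) \<and>
     \<comment> \<open>connection\<close>
     (\<forall>e\<in>E. bij_betw (nabla e) (out_edges E src (src e)) (out_edges E src (tgt e)) \<and>
        nabla e e = rv e \<and>
        (\<forall>e'\<in>out_edges E src (src e). nabla (rv e) (nabla e e') = e')) \<and>
     \<comment> \<open>axial function\<close>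
     (\<forall>e\<in>E. eq_pm (alpha (rv e)) (alpha e)) \<and>
     (\<forall>e\<in>E. \<forall>e'\<in>out_edges E src (src e). cong_pm_mod (alpha (nabla e e')) (alpha e') (alpha e)) \<and>
     int_spans E alpha"

definition gkm3 :: "'v set \<Rightarrow> 'e set \<Rightarrow> ('e \<Rightarrow> 'v) \<Rightarrow> ('e \<Rightarrow> ('k \<Rightarrow> int)) \<Rightarrow> bool" where
  "gkm3 V E src alpha \<longleftrightarrow>
     (\<forall>v\<in>V. \<forall>S. S \<subseteq> out_edges E src v \<longrightarrow> card S \<le> 3 \<longrightarrow>
        (\<forall>e\<in>S. \<forall>e'\<in>S. e \<noteq> e' \<longrightarrow> \<not> eq_pm (alpha e) (alpha e')) \<longrightarrow>
        int_lin_indep S alpha)"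

definition is_face ::
  "'v set \<Rightarrow> 'e set \<Rightarrow> ('e \<Rightarrow> 'v) \<Rightarrow> ('e \<Rightarrow> 'v) \<Rightarrow> ('e \<Rightarrow> 'e) \<Rightarrow> ('e \<Rightarrow> 'e \<Rightarrow> 'e)
   \<Rightarrow> nat \<Rightarrow> 'v set \<times> 'e set \<Rightarrow> bool" where
  "is_face V E src tgt rv nabla i WF \<longleftrightarrow>
     (let W = fst WF; F = snd WF in
       W \<subseteq> V \<and> F \<subseteq> E \<and>
       (\<forall>e\<in>F. src e \<in> W \<and> tgt e \<in> W \<and> rv e \<in> F) \<and>
       connected_on W F src tgt \<and>
       (\<forall>w\<in>W. card (out_edges F src w) = i) \<and>
       (\<forall>e\<in>F. \<forall>e'\<in>out_edges F src (src e). nabla e e' \<in> F))"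

definition S2 ::
  "'v set \<Rightarrow> 'e set \<Rightarrow> ('e \<Rightarrow> 'v) \<Rightarrow> ('e \<Rightarrow> 'v) \<Rightarrow> ('e \<Rightarrow> 'e) \<Rightarrow> ('e \<Rightarrow> 'e \<Rightarrow> 'e)
   \<Rightarrow> ('v set \<times> 'e set) set" where
  "S2 V E src tgt rv nabla = {WF. \<exists>i\<le>2. is_face V E src tgt rv nabla i WF}"

definition subgraph_le :: "'v set \<times> 'e set \<Rightarrow> 'v set \<times> 'e set \<Rightarrow> bool" where
  "subgraph_le A B \<longleftrightarrow> fst A \<subseteq> fst B \<and> snd A \<subseteq> snd B"

definition closed_disc :: "nat \<Rightarrow> (nat \<Rightarrow> real) set" where
  "closed_disc d = {x \<in> topspace (Euclidean_space d). (\<Sum>j<d. (x j)\<^sup>2) \<le> 1}"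

definition open_disc :: "nat \<Rightarrow> (nat \<Rightarrow> real) set" where
  "open_disc d = {x \<in> topspace (Euclidean_space d). (\<Sum>j<d. (x j)\<^sup>2) < 1}"

text \<open>X with the finite set of cells C is a (finite) regular CW complex:
  X Hausdorff, the cells partition X, each closed cell is homeomorphic to a closed
  ball by a homeomorphism carrying the open ball onto the cell, and the boundary of
  each cell is a union of cells.  (For finitely many cells closure-finiteness and the
  weak topology condition are automatic.)\<close>
definition regular_CW_complex :: "'a topology \<Rightarrow> 'a set set \<Rightarrow> bool" where
  "regular_CW_complex X C \<longleftrightarrow>
     Hausdorff_space X \<and> finite C \<and>
     (\<forall>c\<in>C. c \<noteq> {} \<and> c \<subseteq> topspace X) \<and>
     (\<forall>c\<in>C. \<forall>c'\<in>C. c \<noteq> c' \<longrightarrow> c \<inter> c' = {}) \<and>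
     \<Union>C = topspace X \<and>
     (\<forall>c\<in>C. \<exists>d h. homeomorphic_map (subtopology (Euclidean_space d) (closed_disc d))
                      (subtopology X (X closure_of c)) h \<and> h ` open_disc d = c) \<and>
     (\<forall>c\<in>C. \<exists>B\<subseteq>C. X closure_of c - c = \<Union>B)"

text \<open>The space is taken on
  the carrier type nat => real (every finite CW complex embeds in some R^N).\<close>
definition is_cell_poset_of_regular_CW :: "'p set \<Rightarrow> ('p \<Rightarrow> 'p \<Rightarrow> bool) \<Rightarrow> bool" where
  "is_cell_poset_of_regular_CW P le \<longleftrightarrow>
     (\<exists>(X :: (nat \<Rightarrow> real) topology) C \<phi>. regular_CW_complex X C \<and> bij_betw \<phi> P C \<and>
        (\<forall>p\<in>P. \<forall>q\<in>P. le p q \<longleftrightarrow> \<phi> p \<subseteq> X closure_of \<phi> q))"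

end

theory Submission
  imports Defs
begin

lemma CW_from_cells:
  fixes P :: "'p set" and le :: "'p \<Rightarrow> 'p \<Rightarrow> bool" and d :: "'p \<Rightarrow> nat"
    and h :: "'p \<Rightarrow> (nat\<Rightarrow>real) \<Rightarrow> (nat\<Rightarrow>real)"
    and c K :: "'p \<Rightarrow> (nat \<Rightarrow> real) set" and \<kappa> :: "'p \<Rightarrow> nat"
  assumes finP: "finite P" and injk: "inj_on \<kappa> P"
    and antis: "\<And>p q. p\<in>P \<Longrightarrow> q\<in>P \<Longrightarrow> le p q \<Longrightarrow> le q p \<Longrightarrow> p = q"
    and hom: "\<And>p. p\<in>P \<Longrightarrow> homeomorphic_map (subtopology (Euclidean_space (d p)) (closed_disc (d p))) (top_of_set (K p)) (h p)"
    and hc: "\<And>p. p\<in>P \<Longrightarrow> h p ` open_disc (d p) = c p"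
    and cK: "\<And>p. p\<in>P \<Longrightarrow> c p \<subseteq> K p" and Kcl: "\<And>p. p\<in>P \<Longrightarrow> K p \<subseteq> closure (c p)"
    and Kcomp: "\<And>p. p \<in> P \<Longrightarrow> compact (K p)"
    and Kun: "\<And>p. p\<in>P \<Longrightarrow> K p = \<Union>{c q | q. q \<in> P \<and> le q p}"
    and supp: "\<And>p y i. p\<in>P \<Longrightarrow> y \<in> K p \<Longrightarrow> y i \<noteq> 0 \<Longrightarrow> i \<in> \<kappa> ` {q\<in>P. le q p}"
    and pos: "\<And>p y. p\<in>P \<Longrightarrow> y \<in> c p \<Longrightarrow> y (\<kappa> p) \<noteq> 0"
    and ne: "\<And>p. p\<in>P \<Longrightarrow> c p \<noteq> {}"
  shows "is_cell_poset_of_regular_CW P le"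
proof -
  define T where "T = \<Union>(c ` P)"
  define X where "X = (top_of_set T :: (nat \<Rightarrow> real) topology)"
  have key: "le p q" if "p \<in> P" "q \<in> P" "y \<in> c p" "y \<in> K q" for p q y
  proof -
    have "\<kappa> p \<in> \<kappa> ` {r\<in>P. le r q}" using supp[OF that(2,4)] pos[OF that(1,3)] by blast
    then obtain r where "r \<in> P" "le r q" "\<kappa> r = \<kappa> p" by auto
    with injk that(1) have "r = p" by (auto dest: inj_onD)
    with \<open>le r q\<close> show ?thesis by simp
  qed
  have disj: "p = q" if "p \<in> P" "q \<in> P" "y \<in> c p" "y \<in> c q" for p q y
    using key[OF that(1,2,3)] key[OF that(2,1,4)] cK that antis by blast
  have KT: "K p \<subseteq> T" if "p \<in> P" for p
    using Kun[OF that] by (auto simp: T_def)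
  have cT: "c p \<subseteq> T" if "p \<in> P" for p using that by (auto simp: T_def)
  have clos: "X closure_of c p = K p" if "p \<in> P" for p
  proof -
    have "closure (c p) \<subseteq> K p"
      using closure_minimal[OF cK[OF that] compact_imp_closed[OF Kcomp[OF that]]] .
    then have "closure (c p) = K p" using Kcl[OF that] by blast
    moreover have "X closure_of c p = T \<inter> closure (T \<inter> c p)"
      by (simp add: X_def closure_of_subtopology)
    ultimately show ?thesis using cT[OF that] KT[OF that] by (simp add: Int_absorb1 inf.absorb2)
  qed
  have topX: "topspace X = T" by (simp add: X_def)
  have "regular_CW_complex X (c ` P)"
    unfolding regular_CW_complex_def
  proof (intro conjI ballI)
    show "Hausdorff_space X" by (simp add: X_def Hausdorff_space_subtopology)
    show "finite (c ` P)" using finP by simp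
    show "cc \<noteq> {}" if "cc \<in> c ` P" for cc using that ne by auto
    show "cc \<subseteq> topspace X" if "cc \<in> c ` P" for cc using that cT topX by auto
    show "cc \<noteq> cc' \<longrightarrow> cc \<inter> cc' = {}" if "cc \<in> c ` P" "cc' \<in> c ` P" for cc cc'
      using that disj by blast
    show "\<Union> (c ` P) = topspace X" by (simp add: topX T_def)
    show "\<exists>d h. homeomorphic_map (subtopology (Euclidean_space d) (closed_disc d))
                      (subtopology X (X closure_of cc)) h \<and> h ` open_disc d = cc" if cc: "cc \<in> c ` P" for cc
    proof -
      obtain p where p: "p \<in> P" "cc = c p" using cc by auto
      have "subtopology X (X closure_of cc) = top_of_set (K p)"
        using p clos KT by (simp add: X_def subtopology_subtopology Int_absorb1)
      then show ?thesis using hom[OF p(1)] hc[OF p(1)] p by metis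
    qed
    show "\<exists>B\<subseteq>c ` P. X closure_of cc - cc = \<Union> B" if cc: "cc \<in> c ` P" for cc
    proof -
      obtain p where p: "p \<in> P" "cc = c p" using cc by auto
      have "K p - c p = \<Union>(c ` {q\<in>P. le q p \<and> q \<noteq> p})"
      proof
        show "K p - c p \<subseteq> \<Union>(c ` {q\<in>P. le q p \<and> q \<noteq> p})"
          using Kun[OF p(1)] by blast
        show "\<Union>(c ` {q\<in>P. le q p \<and> q \<noteq> p}) \<subseteq> K p - c p"
          using Kun[OF p(1)] disj p(1) by blast
      qed
      then show ?thesis using p clos by (metis (no_types, lifting) image_mono mem_Collect_eq subsetI)
    qed
  qed
  moreover have "bij_betw c P (c ` P)"
    unfolding bij_betw_def inj_on_def using ne disj by blast
  moreover have "le p q \<longleftrightarrow> c p \<subseteq> X closure_of c q" if "p \<in> P" "q \<in> P" for p q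
  proof
    assume "le p q" then show "c p \<subseteq> X closure_of c q" using clos[OF that(2)] Kun[OF that(2)] that by blast
  next
    assume "c p \<subseteq> X closure_of c q"
    then show "le p q" using clos[OF that(2)] ne[OF that(1)] key[OF that] by blast
  qed
  ultimately show ?thesis unfolding is_cell_poset_of_regular_CW_def by blast
qed

definition dl :: "nat \<Rightarrow> nat \<Rightarrow> real" where "dl a = (\<lambda>i. if i = a then 1 else 0)"
definition emb :: "real \<Rightarrow> real \<Rightarrow> nat \<Rightarrow> real" where
  "emb u v = (\<lambda>i. if i = 0 then u else if i = 1 then v else 0)"
definition clamp :: "real \<Rightarrow> real" where "clamp u = max (-1) (min 1 u)"
definition rad :: "(nat \<Rightarrow> real) \<Rightarrow> real" where "rad x = sqrt ((x 0)\<^sup>2 + (x 1)\<^sup>2)"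

lemma isCont_coord [continuous_intros]: "continuous (at x within S) (\<lambda>y::nat\<Rightarrow>real. y i)"
proof -
  have "isCont (\<lambda>y::nat\<Rightarrow>real. y i) x"
    using continuous_on_product_coordinates[of i] continuous_on_eq_continuous_at[OF open_UNIV] by blast
  then show ?thesis by (rule continuous_at_imp_continuous_within)
qed

lemma continuous_on_coord [continuous_intros]: "continuous_on S (\<lambda>y::nat\<Rightarrow>real. y i)"
  by (rule continuous_on_subset[OF continuous_on_product_coordinates subset_UNIV])

lemma isCont_rad [continuous_intros]: "continuous (at x within S) rad"
  unfolding rad_def by (intro continuous_intros)

lemma rad_nonneg: "rad x \<ge> 0" by (simp add: rad_def)

lemma cont_scaled:
  fixes \<Phi> :: "real \<Rightarrow> real \<Rightarrow> real"
  assumes c: "continuous_on UNIV (\<lambda>p. \<Phi> (fst p) (snd p))" and b: "\<And>u v. \<bar>\<Phi> u v\<bar> \<le> 1"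
  shows "continuous_on S (\<lambda>x::nat\<Rightarrow>real. rad x * \<Phi> (x 0 / rad x) (x 1 / rad x))"
proof -
  have "isCont (\<lambda>x::nat\<Rightarrow>real. rad x * \<Phi> (x 0 / rad x) (x 1 / rad x)) x" for x
  proof (cases "rad x = 0")
    case False
    have k: "isCont (\<lambda>y::nat\<Rightarrow>real. (y 0 / rad y, y 1 / rad y)) x"
      using False by (intro continuous_intros) auto
    have "isCont (\<lambda>p. \<Phi> (fst p) (snd p)) (x 0 / rad x, x 1 / rad x)"
      using c by (simp add: continuous_on_eq_continuous_at)
    then have "isCont ((\<lambda>p. \<Phi> (fst p) (snd p)) \<circ> (\<lambda>y::nat\<Rightarrow>real. (y 0 / rad y, y 1 / rad y))) x"
      using continuous_at_compose[OF k] by simp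
    then have "isCont (\<lambda>y::nat\<Rightarrow>real. \<Phi> (y 0 / rad y) (y 1 / rad y)) x"
      by (simp add: o_def)
    then show ?thesis by (intro continuous_intros)
  next
    case True
    have r: "(rad \<longlongrightarrow> 0) (at x)"
      using isCont_rad[of x UNIV] True by (simp add: isCont_def)
    have "((\<lambda>y::nat\<Rightarrow>real. rad y * \<Phi> (y 0 / rad y) (y 1 / rad y)) \<longlongrightarrow> 0) (at x)"
    proof (rule Lim_null_comparison[OF _ r])
      show "\<forall>\<^sub>F y in at x. norm (rad y * \<Phi> (y 0 / rad y) (y 1 / rad y)) \<le> rad y"
      proof (rule always_eventually, rule allI)
        fix y :: "nat \<Rightarrow> real"
        have "\<bar>rad y * \<Phi> (y 0 / rad y) (y 1 / rad y)\<bar> = rad y * \<bar>\<Phi> (y 0 / rad y) (y 1 / rad y)\<bar>"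
          by (simp add: abs_mult rad_nonneg)
        also have "\<dots> \<le> rad y * 1" by (rule mult_left_mono[OF b rad_nonneg])
        finally show "norm (rad y * \<Phi> (y 0 / rad y) (y 1 / rad y)) \<le> rad y" by simp
      qed
    qed
    then show ?thesis using True by (simp add: isCont_def)
  qed
  then show ?thesis by (simp add: continuous_at_imp_continuous_on)
qed

definition hatf :: "nat \<Rightarrow> nat \<Rightarrow> real \<Rightarrow> real \<Rightarrow> real" where
  "hatf m j u v = max 0 (1 - real m / (2*pi) * arccos (clamp (u * cos (2*pi*real j/real m) + v * sin (2*pi*real j/real m))))"

lemma clamp_cont: "continuous_on S (\<lambda>u. arccos (clamp u))"
  unfolding clamp_def by (intro continuous_intros) auto

lemma hatf_cont: "continuous_on UNIV (\<lambda>p. hatf m j (fst p) (snd p))"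
  unfolding hatf_def clamp_def by (intro continuous_intros) auto

lemma hatf_bound: "\<bar>hatf m j u v\<bar> \<le> 1"
proof -
  have "-1 \<le> clamp w \<and> clamp w \<le> 1" for w unfolding clamp_def by auto
  then have "arccos (clamp w) \<ge> 0" for w using arccos_lbound by blast
  then have "real m / (2*pi) * arccos (clamp w) \<ge> 0" for w by simp
  then show ?thesis unfolding hatf_def by (smt (verit))
qed

lemma arccos_cos_min:
  assumes "\<bar>\<phi>\<bar> \<le> 2*pi"
  shows "arccos (cos \<phi>) = min \<bar>\<phi>\<bar> (2*pi - \<bar>\<phi>\<bar>)"
proof (cases "\<bar>\<phi>\<bar> \<le> pi")
  case True
  then show ?thesis using arccos_cos_eq_abs by simp
next
  case False
  have "cos \<phi> = cos (2*pi - \<bar>\<phi>\<bar>)" by simp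
  moreover have "arccos (cos (2*pi - \<bar>\<phi>\<bar>)) = 2*pi - \<bar>\<phi>\<bar>"
    using False assms by (intro arccos_cos) auto
  ultimately show ?thesis using False by simp
qed

definition th :: "nat \<Rightarrow> nat \<Rightarrow> real \<Rightarrow> real" where
  "th m n t = 2*pi*(real n + t)/real m"

lemma hat_val:
  assumes m: "m \<ge> 3" and n: "n < m" and t: "0 \<le> t" "t < 1" and j: "j < m"
  shows "hatf m j (cos (th m n t)) (sin (th m n t)) = (if j = n then 1 - t else if j = Suc n mod m then t else 0)"
proof -
  define D where "D = \<bar>real n + t - real j\<bar>"
  have mpos: "real m > 0" using m by simp
  have "cos (th m n t) * cos (2*pi*real j/real m) + sin (th m n t) * sin (2*pi*real j/real m)
        = cos (th m n t - 2*pi*real j/real m)" by (simp add: cos_diff)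
  moreover have "th m n t - 2*pi*real j/real m = 2*pi*(real n + t - real j)/real m"
    unfolding th_def by (simp add: diff_divide_distrib[symmetric] algebra_simps)
  ultimately have eq1: "cos (th m n t) * cos (2*pi*real j/real m) + sin (th m n t) * sin (2*pi*real j/real m)
        = cos (2*pi*(real n + t - real j)/real m)" by simp
  have cl: "clamp (cos w) = cos w" for w unfolding clamp_def by simp
  have Dle: "D \<le> real m" using n j t unfolding D_def by (simp add: abs_if)
  have absphi: "\<bar>2*pi*(real n + t - real j)/real m\<bar> = 2*pi*D/real m"
    unfolding D_def using mpos by (simp add: abs_mult abs_divide)
  have le2: "2*pi*D/real m \<le> 2*pi" using Dle mpos by (simp add: divide_le_eq)
  have ac: "arccos (cos (2*pi*(real n + t - real j)/real m)) = min (2*pi*D/real m) (2*pi - 2*pi*D/real m)"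
  proof -
    have "\<bar>2*pi*(real n + t - real j)/real m\<bar> \<le> 2*pi" using absphi le2 by linarith
    from arccos_cos_min[OF this] show ?thesis by (simp only: absphi)
  qed
  have "min (2*pi*D/real m) (2*pi - 2*pi*D/real m) = 2*pi/real m * min D (real m - D)"
    using mpos by (simp add: min_def field_simps)
  then have "real m / (2*pi) * arccos (cos (2*pi*(real n + t - real j)/real m)) = min D (real m - D)"
    using ac mpos by simp
  then have hv: "hatf m j (cos (th m n t)) (sin (th m n t)) = max 0 (1 - min D (real m - D))"
    unfolding hatf_def eq1 cl by simp
  show ?thesis
  proof (cases "j = n")
    case True
    then have "D = t" using t unfolding D_def by simp
    then show ?thesis using hv True t m by (simp add: min_def max_def)
  next
    case jn: False
    show ?thesis
    proof (cases "j = Suc n mod m")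
      case True
      show ?thesis
      proof (cases "Suc n < m")
        case True2: True
        then have "j = Suc n" using True by simp
        then have "D = 1 - t" using t unfolding D_def by simp
        then show ?thesis using hv jn True t m by (simp add: min_def max_def)
      next
        case False
        then have "Suc n = m" using n by simp
        then have "j = 0" using True by simp
        then have "D = real m - 1 + t" using t \<open>Suc n = m\<close> unfolding D_def by (simp add: of_nat_diff)
        then show ?thesis using hv jn True t m \<open>j = 0\<close> by (simp add: min_def max_def)
      qed
    next
      case jsn: False
      have "D \<ge> 1 \<and> real m - D \<ge> 1"
      proof (cases "j > n")
        case True
        then have "Suc n < m" using j by simp
        then have "j \<ge> n + 2" using jsn True by auto
        then have "real j \<ge> real n + 2" by simp
        then show ?thesis using t j unfolding D_def by (simp add: abs_if)
      next
        case False
        then have jl: "j < n" using jn by simp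
        show ?thesis
        proof (cases "j = 0")
          case True
          then have "Suc n < m" using jsn n by (metis Suc_lessI mod_self)
          then have "real n + 2 \<le> real m" by simp
          then show ?thesis using t True jl unfolding D_def by (simp add: abs_if)
        next
          case False
          then have "real j \<ge> 1" "real j + 1 \<le> real n" "real n + 1 \<le> real m" using jl n by auto
          then show ?thesis using t unfolding D_def by (simp add: abs_if)
        qed
      qed
      then show ?thesis using hv jn jsn by (simp add: min_def max_def)
    qed
  qed
qed

definition coneh :: "nat \<Rightarrow> nat \<Rightarrow> (nat \<Rightarrow> nat) \<Rightarrow> (nat\<Rightarrow>real) \<Rightarrow> (nat\<Rightarrow>real)" where
  "coneh m a P x = (\<lambda>i. (1 - rad x) * dl a i + (\<Sum>j<m. rad x * hatf m j (x 0 / rad x) (x 1 / rad x) * dl (P j) i))"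

definition Fq :: "nat \<Rightarrow> nat \<Rightarrow> (nat\<Rightarrow>nat) \<Rightarrow> real \<Rightarrow> nat \<Rightarrow> real \<Rightarrow> (nat\<Rightarrow>real)" where
  "Fq m a P r n t = (\<lambda>i. (1-r) * dl a i + r * ((1-t) * dl (P n) i + t * dl (P (Suc n mod m)) i))"

lemma continuous_on_rad [continuous_intros]: "continuous_on S rad"
  unfolding rad_def by (intro continuous_intros)

lemma coneh_cont: "continuous_on S (coneh m a P)"
proof -
  have c: "continuous_on S (\<lambda>x. rad x * hatf m j (x 0 / rad x) (x 1 / rad x) * dl (P j) i)" for j i
    by (rule continuous_on_mult_right[OF cont_scaled[OF hatf_cont hatf_bound]])
  show ?thesis unfolding coneh_def
    by (intro continuous_on_coordinatewise_then_product continuous_on_add continuous_on_sum c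
        continuous_on_mult_right continuous_on_diff continuous_on_const continuous_on_rad)
qed

lemma sum_two_delta:
  fixes f :: "nat \<Rightarrow> real"
  assumes "n \<noteq> n'" "n < m" "n' < m"
  shows "(\<Sum>j<m. (if j = n then A else if j = n' then B else 0) * f j) = A * f n + B * f n'"
proof -
  have "(\<Sum>j<m. (if j = n then A else if j = n' then B else 0) * f j)
      = (\<Sum>j<m. (if j = n then A * f j else 0) + (if j = n' then B * f j else 0))"
    by (rule sum.cong) (use assms in auto)
  also have "\<dots> = A * f n + B * f n'" using assms by (simp add: sum.distrib)
  finally show ?thesis .
qed

lemma rad_emb: "0 \<le> r \<Longrightarrow> rad (emb (r * cos \<theta>) (r * sin \<theta>)) = r"
proof -
  assume r: "0 \<le> r"
  have "(r * cos \<theta>)\<^sup>2 + (r * sin \<theta>)\<^sup>2 = r\<^sup>2"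
    by (simp add: power_mult_distrib flip: distrib_left)
  then show ?thesis using r by (simp add: rad_def emb_def)
qed

lemma suc_mod_ne: assumes "n < m" "2 \<le> m" shows "n \<noteq> Suc n mod m"
proof (cases "Suc n < m")
  case True then show ?thesis by simp
next
  case False
  then have "Suc n = m" using assms by simp
  then show ?thesis using assms by auto
qed

lemma emb_eq: "(\<forall>i\<ge>2. x i = 0) \<Longrightarrow> x 0 = u \<Longrightarrow> x 1 = v \<Longrightarrow> x = emb u v"
proof (rule ext)
  fix i assume "\<forall>i\<ge>2. x i = 0" "x 0 = u" "x 1 = v"
  then show "x i = emb u v i"
    by (cases "i = 0"; cases "i = 1") (auto simp: emb_def)
qed

lemma coneh_polar:
  assumes r: "0 \<le> r" and m: "m \<ge> 3" and n: "n < m" and t: "0 \<le> t" "t < 1"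
  shows "coneh m a P (emb (r * cos (th m n t)) (r * sin (th m n t))) = Fq m a P r n t"
proof (cases "r = 0")
  case True
  then show ?thesis using rad_emb[OF r] by (simp add: coneh_def Fq_def)
next
  case False
  have n1: "n \<noteq> Suc n mod m" "Suc n mod m < m" using n m suc_mod_ne[OF n] by simp_all
  have e0: "emb (r * cos (th m n t)) (r * sin (th m n t)) 0 / r = cos (th m n t)"
    and e1: "emb (r * cos (th m n t)) (r * sin (th m n t)) 1 / r = sin (th m n t)"
    using False by (simp_all add: emb_def)
  show ?thesis
  proof
    fix i
    have "(\<Sum>j<m. r * hatf m j (cos (th m n t)) (sin (th m n t)) * dl (P j) i)
       = (\<Sum>j<m. (if j = n then r * (1 - t) else if j = Suc n mod m then r * t else 0) * dl (P j) i)"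
      by (rule sum.cong) (use hat_val[OF m n t] in auto)
    also have "\<dots> = r * (1 - t) * dl (P n) i + r * t * dl (P (Suc n mod m)) i"
      by (rule sum_two_delta[OF n1(1) n n1(2)])
    finally show "coneh m a P (emb (r * cos (th m n t)) (r * sin (th m n t))) i = Fq m a P r n t i"
      unfolding coneh_def Fq_def rad_emb[OF r] e0 e1 by (simp add: algebra_simps)
  qed
qed

lemma sum2: "(\<Sum>j<2. f j) = f 0 + f (1::nat)"
  by (simp add: numeral_2_eq_2)

lemma closed_disc_2: "x \<in> closed_disc 2 \<longleftrightarrow> (\<forall>i\<ge>2. x i = 0) \<and> (x 0)\<^sup>2 + (x 1)\<^sup>2 \<le> 1"
  by (simp add: closed_disc_def topspace_Euclidean_space sum2)

lemma open_disc_2: "x \<in> open_disc 2 \<longleftrightarrow> (\<forall>i\<ge>2. x i = 0) \<and> (x 0)\<^sup>2 + (x 1)\<^sup>2 < 1"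
  by (simp add: open_disc_def topspace_Euclidean_space sum2)

lemma emb_eta: "(\<forall>i\<ge>2. x i = 0) \<Longrightarrow> x = emb (x 0) (x 1)"
  by (rule ext) (simp add: emb_def)

lemma emb_polar_disc:
  assumes "0 \<le> r"
  shows "emb (r * cos \<theta>) (r * sin \<theta>) \<in> closed_disc 2 \<longleftrightarrow> r \<le> 1"
    and "emb (r * cos \<theta>) (r * sin \<theta>) \<in> open_disc 2 \<longleftrightarrow> r < 1"
proof -
  have "(r * cos \<theta>)\<^sup>2 + (r * sin \<theta>)\<^sup>2 = r\<^sup>2"
    by (simp add: power_mult_distrib flip: distrib_left)
  moreover have "r\<^sup>2 \<le> 1 \<longleftrightarrow> r \<le> 1" "r\<^sup>2 < 1 \<longleftrightarrow> r < 1" using assms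
    by (simp_all add: power_le_one_iff abs_square_le_1 abs_square_less_1)
  ultimately show "emb (r * cos \<theta>) (r * sin \<theta>) \<in> closed_disc 2 \<longleftrightarrow> r \<le> 1"
    and "emb (r * cos \<theta>) (r * sin \<theta>) \<in> open_disc 2 \<longleftrightarrow> r < 1"
    by (simp_all add: closed_disc_2 open_disc_2 emb_def)
qed

lemma disc_polar:
  assumes x: "x \<in> closed_disc 2" and m: "m \<ge> 1"
  obtains r n t where "0 \<le> r" "r \<le> 1" "n < m" "0 \<le> t" "t < 1"
    "x = emb (r * cos (th m n t)) (r * sin (th m n t))"
proof -
  have z: "\<forall>i\<ge>2. x i = 0" and s1: "(x 0)\<^sup>2 + (x 1)\<^sup>2 \<le> 1" using x by (auto simp: closed_disc_2)
  define r where "r = rad x"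
  have r0: "0 \<le> r" by (simp add: r_def rad_nonneg)
  have r1: "r \<le> 1" using s1 by (simp add: r_def rad_def real_sqrt_le_1_iff)
  have rsq: "r\<^sup>2 = (x 0)\<^sup>2 + (x 1)\<^sup>2" by (simp add: r_def rad_def)
  show ?thesis
  proof (cases "r = 0")
    case True
    then have "x 0 = 0" "x 1 = 0" using rsq by (simp_all add: sum_power2_eq_zero_iff)
    then have "x = emb 0 0" using emb_eq[OF z, of 0 0] by blast
    then have "x = emb (0 * cos (th m 0 0)) (0 * sin (th m 0 0))" by simp
    then show ?thesis using that[of 0 0 0] m by simp
  next
    case False
    then have rp: "r > 0" using r0 by simp
    have "(x 0 / r)\<^sup>2 + (x 1 / r)\<^sup>2 = ((x 0)\<^sup>2 + (x 1)\<^sup>2) / r\<^sup>2"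
      by (simp add: power_divide add_divide_distrib)
    also have "\<dots> = r\<^sup>2 / r\<^sup>2" by (simp only: rsq)
    also have "\<dots> = 1" using rp by simp
    finally have "(x 0 / r)\<^sup>2 + (x 1 / r)\<^sup>2 = 1" .
    then obtain \<theta> where th: "0 \<le> \<theta>" "\<theta> < 2*pi" "x 0 / r = cos \<theta>" "x 1 / r = sin \<theta>"
      by (rule sincos_total_2pi)
    define s where "s = real m * \<theta> / (2*pi)"
    have s0: "0 \<le> s" and sm: "s < real m" using th m by (auto simp: s_def divide_less_eq)
    define n where "n = nat \<lfloor>s\<rfloor>"
    define t where "t = s - real n"
    have "real n \<le> s" "s < real n + 1" using s0 by (simp_all add: n_def)
    then have t0: "0 \<le> t" and t1: "t < 1" by (simp_all add: t_def)
    have nm: "n < m" using \<open>real n \<le> s\<close> sm by linarith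
    have "th m n t = \<theta>" using m by (simp add: th_def t_def s_def)
    moreover have "x 0 = r * cos \<theta>" "x 1 = r * sin \<theta>" using th rp by (simp_all add: field_simps)
    then have "x = emb (r * cos \<theta>) (r * sin \<theta>)"
      by (rule emb_eq[OF z])
    ultimately show ?thesis using that r0 r1 nm t0 t1 by metis
  qed
qed

lemma Fq_apex: "a \<notin> P ` {..<m} \<Longrightarrow> n < m \<Longrightarrow> Fq m a P r n t a = 1 - r"
  apply (simp add: Fq_def dl_def)
  by (metis imageI lessThan_iff mod_less_divisor zero_less_iff_neq_zero not_less0 less_trans)

lemma Fq_P:
  assumes "inj_on P {..<m}" "a \<notin> P ` {..<m}" "n < m" "j < m" "m \<ge> 3"
  shows "Fq m a P r n t (P j) = r * ((if j = n then 1 - t else 0) + (if j = Suc n mod m then t else 0))"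
proof -
  have sn: "Suc n mod m < m" using assms by simp
  have 1: "P j \<noteq> a" using assms by auto
  have 2: "P j = P n \<longleftrightarrow> j = n" using assms inj_onD[OF assms(1)] by auto
  have 3: "P j = P (Suc n mod m) \<longleftrightarrow> j = Suc n mod m" using assms sn inj_onD[OF assms(1)] by auto
  show ?thesis unfolding Fq_def dl_def using 1 2 3 by simp
qed

lemma mod_cycle_contra:
  assumes "n < m" "n' < m" "3 \<le> m" "n = Suc n' mod m" "n' = Suc n mod m"
  shows False
proof (cases "Suc n < m")
  case True
  then have n': "n' = Suc n" using assms(5) by simp
  show False
  proof (cases "Suc (Suc n) < m")
    case True
    then have "Suc n' mod m = Suc (Suc n)" using n' by simp
    then show False using assms(4) by simp
  next
    case False
    then have "Suc n' = m" using n' assms(2) by simp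
    then have "n = 0" using assms(4) by simp
    then show False using \<open>Suc n' = m\<close> n' assms(3) by simp
  qed
next
  case False
  then have "Suc n = m" using assms(1) by simp
  then have "n' = 0" using assms(5) by simp
  then have "n = 1" using assms(4) assms(3) by simp
  then show False using \<open>Suc n = m\<close> assms(3) by simp
qed

lemma Fq_inj:
  assumes P: "inj_on P {..<m}" "a \<notin> P ` {..<m}" and m: "m \<ge> 3"
    and n: "n < m" "n' < m" and t: "0 \<le> t" "t < 1" "0 \<le> t'" "t' < 1"
    and eq: "Fq m a P r n t = Fq m a P r' n' t'"
  shows "r = r' \<and> (r = 0 \<or> (n = n' \<and> t = t'))"
proof -
  have rr: "r = r'" using fun_cong[OF eq, of a] Fq_apex[OF P(2) n(1)] Fq_apex[OF P(2) n(2)] by simp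
  have nn: "n \<noteq> Suc n mod m" "n' \<noteq> Suc n' mod m" using n m suc_mod_ne by simp_all
  have "n = n' \<and> t = t'" if r0: "r \<noteq> 0"
  proof -
    have A: "r * (1 - t) = r * ((if n = n' then 1 - t' else 0) + (if n = Suc n' mod m then t' else 0))"
      using fun_cong[OF eq, of "P n"] Fq_P[OF P n(1) n(1) m] Fq_P[OF P n(2) n(1) m] nn rr by simp
    have B: "r * ((if n' = n then 1 - t else 0) + (if n' = Suc n mod m then t else 0)) = r * (1 - t')"
      using fun_cong[OF eq, of "P n'"] Fq_P[OF P n(1) n(2) m] Fq_P[OF P n(2) n(2) m] nn rr by simp
    show ?thesis
    proof (cases "n = n'")
      case True
      then show ?thesis using A nn r0 by simp
    next
      case False
      then have "n = Suc n' mod m" using A r0 t by (auto split: if_splits)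
      moreover have "n' = Suc n mod m" using B r0 t False by (auto split: if_splits)
      ultimately show ?thesis using mod_cycle_contra[OF n m] by blast
    qed
  qed
  then show ?thesis using rr by blast
qed

lemma coneh_closed_image:
  assumes m: "m \<ge> 3"
  shows "coneh m a P ` closed_disc 2 = {Fq m a P r n t | r n t. 0 \<le> r \<and> r \<le> 1 \<and> n < m \<and> 0 \<le> t \<and> t < 1}"
proof
  show "coneh m a P ` closed_disc 2 \<subseteq> {Fq m a P r n t | r n t. 0 \<le> r \<and> r \<le> 1 \<and> n < m \<and> 0 \<le> t \<and> t < 1}"
  proof
    fix y assume "y \<in> coneh m a P ` closed_disc 2"
    then obtain x where x: "x \<in> closed_disc 2" "y = coneh m a P x" by auto
    obtain r n t where rnt: "0 \<le> r" "r \<le> 1" "n < m" "0 \<le> t" "t < 1"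
      "x = emb (r * cos (th m n t)) (r * sin (th m n t))"
      using disc_polar[OF x(1)] m by (metis Suc_leD le_trans numeral_3_eq_3 le_add1 plus_1_eq_Suc)
    then have "y = Fq m a P r n t" using x coneh_polar[OF rnt(1) m rnt(3) rnt(4,5)] by simp
    then show "y \<in> {Fq m a P r n t | r n t. 0 \<le> r \<and> r \<le> 1 \<and> n < m \<and> 0 \<le> t \<and> t < 1}"
      using rnt by blast
  qed
next
  show "{Fq m a P r n t | r n t. 0 \<le> r \<and> r \<le> 1 \<and> n < m \<and> 0 \<le> t \<and> t < 1} \<subseteq> coneh m a P ` closed_disc 2"
  proof
    fix y assume "y \<in> {Fq m a P r n t | r n t. 0 \<le> r \<and> r \<le> 1 \<and> n < m \<and> 0 \<le> t \<and> t < 1}"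
    then obtain r n t where rnt: "0 \<le> r" "r \<le> 1" "n < m" "0 \<le> t" "t < 1" and y: "y = Fq m a P r n t" by blast
    have "emb (r * cos (th m n t)) (r * sin (th m n t)) \<in> closed_disc 2"
      using emb_polar_disc(1)[OF rnt(1)] rnt by simp
    then show "y \<in> coneh m a P ` closed_disc 2" unfolding y
      using coneh_polar[OF rnt(1) m rnt(3) rnt(4,5)] by (metis image_eqI)
  qed
qed

lemma coneh_open_image:
  assumes m: "m \<ge> 3"
  shows "coneh m a P ` open_disc 2 = {Fq m a P r n t | r n t. 0 \<le> r \<and> r < 1 \<and> n < m \<and> 0 \<le> t \<and> t < 1}"
proof
  have od: "open_disc 2 \<subseteq> closed_disc 2" by (auto simp: open_disc_2 closed_disc_2)
  show "coneh m a P ` open_disc 2 \<subseteq> {Fq m a P r n t | r n t. 0 \<le> r \<and> r < 1 \<and> n < m \<and> 0 \<le> t \<and> t < 1}"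
  proof
    fix y assume "y \<in> coneh m a P ` open_disc 2"
    then obtain x where x: "x \<in> open_disc 2" "y = coneh m a P x" by auto
    obtain r n t where rnt: "0 \<le> r" "r \<le> 1" "n < m" "0 \<le> t" "t < 1"
      "x = emb (r * cos (th m n t)) (r * sin (th m n t))"
      using disc_polar[of x m] x(1) od m by (metis Suc_leD le_trans numeral_3_eq_3 le_add1 plus_1_eq_Suc subsetD)
    moreover have "r < 1" using emb_polar_disc(2)[OF rnt(1)] x(1) rnt(6) by simp
    moreover have "y = Fq m a P r n t" using x rnt coneh_polar[OF rnt(1) m rnt(3) rnt(4,5)] by simp
    ultimately show "y \<in> {Fq m a P r n t | r n t. 0 \<le> r \<and> r < 1 \<and> n < m \<and> 0 \<le> t \<and> t < 1}"
      by blast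
  qed
next
  show "{Fq m a P r n t | r n t. 0 \<le> r \<and> r < 1 \<and> n < m \<and> 0 \<le> t \<and> t < 1} \<subseteq> coneh m a P ` open_disc 2"
  proof
    fix y assume "y \<in> {Fq m a P r n t | r n t. 0 \<le> r \<and> r < 1 \<and> n < m \<and> 0 \<le> t \<and> t < 1}"
    then obtain r n t where rnt: "0 \<le> r" "r < 1" "n < m" "0 \<le> t" "t < 1" and y: "y = Fq m a P r n t" by blast
    have "emb (r * cos (th m n t)) (r * sin (th m n t)) \<in> open_disc 2"
      using emb_polar_disc(2)[OF rnt(1)] rnt by simp
    then show "y \<in> coneh m a P ` open_disc 2" unfolding y
      using coneh_polar[OF rnt(1) m rnt(3) rnt(4,5)] by (metis image_eqI)
  qed
qed

lemma coneh_inj: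
  assumes m: "m \<ge> 3" and P: "inj_on P {..<m}" "a \<notin> P ` {..<m}"
  shows "inj_on (coneh m a P) (closed_disc 2)"
proof
  fix x y assume x: "x \<in> closed_disc 2" and y: "y \<in> closed_disc 2" and eq: "coneh m a P x = coneh m a P y"
  have m1: "m \<ge> 1" using m by simp
  obtain r n t where rnt: "0 \<le> r" "r \<le> 1" "n < m" "0 \<le> t" "t < 1"
      "x = emb (r * cos (th m n t)) (r * sin (th m n t))" using disc_polar[OF x m1] by blast
  obtain r' n' t' where rnt': "0 \<le> r'" "r' \<le> 1" "n' < m" "0 \<le> t'" "t' < 1"
      "y = emb (r' * cos (th m n' t')) (r' * sin (th m n' t'))" using disc_polar[OF y m1] by blast
  have "Fq m a P r n t = Fq m a P r' n' t'"
    using eq coneh_polar[OF rnt(1) m rnt(3) rnt(4,5)] coneh_polar[OF rnt'(1) m rnt'(3) rnt'(4,5)] rnt(6) rnt'(6)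
    by simp
  from Fq_inj[OF P m rnt(3) rnt'(3) rnt(4,5) rnt'(4,5) this]
  show "x = y" using rnt(6) rnt'(6) by auto
qed

lemma emb_cont [continuous_intros]: "continuous_on S (\<lambda>p. emb (fst p) (snd p))"
proof (rule continuous_on_coordinatewise_then_product)
  fix i show "continuous_on S (\<lambda>p. emb (fst p) (snd p) i)"
    by (cases "i = 0"; cases "i = 1") (auto simp: emb_def intro: continuous_intros)
qed

lemma closed_disc_2_img: "closed_disc 2 = (\<lambda>p. emb (fst p) (snd p)) ` cball (0::real\<times>real) 1"
proof
  show "closed_disc 2 \<subseteq> (\<lambda>p. emb (fst p) (snd p)) ` cball 0 1"
  proof
    fix x assume "x \<in> closed_disc 2"
    then have z: "\<forall>i\<ge>2. x i = 0" and s: "(x 0)\<^sup>2 + (x 1)\<^sup>2 \<le> 1" by (auto simp: closed_disc_2)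
    have e: "x = emb (x 0) (x 1)" by (rule emb_eq[OF z]) simp_all
    have c: "(x 0, x 1) \<in> cball 0 1" using s by (simp add: norm_Pair real_sqrt_le_1_iff)
    show "x \<in> (\<lambda>p. emb (fst p) (snd p)) ` cball 0 1"
      by (rule image_eqI[OF _ c]) (unfold fst_conv snd_conv, rule e)
  qed
  show "(\<lambda>p. emb (fst p) (snd p)) ` cball 0 1 \<subseteq> closed_disc 2"
    by (auto simp: closed_disc_2 emb_def norm_Pair real_sqrt_le_1_iff)
qed

lemma closed_disc_1: "x \<in> closed_disc 1 \<longleftrightarrow> (\<forall>i\<ge>1. x i = 0) \<and> (x 0)\<^sup>2 \<le> 1"
  unfolding closed_disc_def topspace_Euclidean_space by auto

lemma open_disc_1: "x \<in> open_disc 1 \<longleftrightarrow> (\<forall>i\<ge>1. x i = 0) \<and> (x 0)\<^sup>2 < 1"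
  unfolding open_disc_def topspace_Euclidean_space by auto

lemma emb1_cont [continuous_intros]: "continuous_on S (\<lambda>u. emb u 0)"
proof (rule continuous_on_coordinatewise_then_product)
  fix i show "continuous_on S (\<lambda>u. emb u 0 i)"
    by (cases "i = 0") (auto simp: emb_def intro: continuous_intros)
qed

lemma closed_disc_1_img: "closed_disc 1 = (\<lambda>u. emb u 0) ` {-1..1}"
proof
  show "closed_disc 1 \<subseteq> (\<lambda>u. emb u 0) ` {-1..1}"
  proof
    fix x assume "x \<in> closed_disc 1"
    then have z: "\<forall>i\<ge>1. x i = 0" and s: "(x 0)\<^sup>2 \<le> 1" using closed_disc_1 by blast+
    have "x = emb (x 0) 0" by (rule emb_eq) (use z in auto)
    moreover have "x 0 \<in> {-1..1}" using s abs_square_le_1 by (auto simp: abs_le_iff)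
    ultimately show "x \<in> (\<lambda>u. emb u 0) ` {-1..1}" by blast
  qed
  show "(\<lambda>u. emb u 0) ` {-1..1} \<subseteq> closed_disc 1"
  proof (rule image_subsetI)
    fix u :: real assume "u \<in> {-1..1}"
    then have "u\<^sup>2 \<le> 1" by (simp add: abs_square_le_1 abs_le_iff)
    then show "emb u 0 \<in> closed_disc 1" unfolding closed_disc_1 by (simp add: emb_def)
  qed
qed

lemma closed_disc_0: "closed_disc 0 = {(\<lambda>_. 0)}"
  by (auto simp: closed_disc_def topspace_Euclidean_space)

lemma open_disc_0: "open_disc 0 = {(\<lambda>_. 0)}"
  by (auto simp: open_disc_def topspace_Euclidean_space)

lemma compact_closed_disc: "d \<le> 2 \<Longrightarrow> compact (closed_disc d)"
proof -
  assume "d \<le> 2"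
  then consider "d = 0" | "d = 1" | "d = 2" by linarith
  then show ?thesis
  proof cases
    case 1 then show ?thesis by (simp add: closed_disc_0)
  next
    case 2
    have "continuous_on {-1..1} (\<lambda>u::real. emb u 0)" by (rule emb1_cont)
    then show ?thesis using 2 closed_disc_1_img compact_continuous_image by (metis compact_Icc)
  next
    case 3
    then show ?thesis using closed_disc_2_img compact_continuous_image emb_cont compact_cball by metis
  qed
qed

lemma closed_disc_closure: "closed_disc d \<subseteq> closure (open_disc d)"
proof
  fix x assume x: "x \<in> closed_disc d"
  define g where "g = (\<lambda>t::real. (\<lambda>i. t * x i))"
  have gc: "continuous_on UNIV g" unfolding g_def
    by (intro continuous_on_coordinatewise_then_product continuous_intros)
  have "g ` {0..<1} \<subseteq> open_disc d"
  proof
    fix y assume "y \<in> g ` {0..<1}"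
    then obtain t where t: "0 \<le> t" "t < 1" "y = g t" by auto
    have "(\<Sum>j<d. (y j)\<^sup>2) = t\<^sup>2 * (\<Sum>j<d. (x j)\<^sup>2)"
      by (simp add: t(3) g_def power_mult_distrib sum_distrib_left)
    also have "\<dots> \<le> t\<^sup>2 * 1" using x by (intro mult_left_mono) (auto simp: closed_disc_def)
    also have "\<dots> < 1" using t by (simp add: abs_square_less_1)
    finally show "y \<in> open_disc d" using x t by (auto simp: open_disc_def closed_disc_def topspace_Euclidean_space g_def)
  qed
  moreover have "g ` closure {0..<1} \<subseteq> closure (g ` {0..<1})"
    by (rule continuous_image_closure_subset[OF gc]) simp
  moreover have "x \<in> g ` closure {0..<1}" by (simp add: g_def image_iff) (rule bexI[of _ 1], auto)
  ultimately show "x \<in> closure (open_disc d)" by (meson closure_mono subsetD)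
qed

lemma open_closed_disc: "open_disc d \<subseteq> closed_disc d"
  by (auto simp: open_disc_def closed_disc_def)

lemma Eucl_sub: "S \<subseteq> topspace (Euclidean_space d) \<Longrightarrow> subtopology (Euclidean_space d) S = top_of_set S"
  by (simp add: Euclidean_space_def euclidean_product_topology subtopology_subtopology Int_absorb1)

lemma disc_cell:
  fixes h :: "(nat \<Rightarrow> real) \<Rightarrow> (nat \<Rightarrow> real)"
  assumes d: "d \<le> 2" and hc: "continuous_on (closed_disc d) h" and hi: "inj_on h (closed_disc d)"
  shows "homeomorphic_map (subtopology (Euclidean_space d) (closed_disc d)) (top_of_set (h ` closed_disc d)) h"
    and "h ` closed_disc d \<subseteq> closure (h ` open_disc d)"
    and "compact (h ` closed_disc d)"
    and "h ` open_disc d \<subseteq> h ` closed_disc d"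
proof -
  have cd: "compact (closed_disc d)" using compact_closed_disc[OF d] .
  have sub: "closed_disc d \<subseteq> topspace (Euclidean_space d)" by (auto simp: closed_disc_def)
  show "homeomorphic_map (subtopology (Euclidean_space d) (closed_disc d)) (top_of_set (h ` closed_disc d)) h"
    unfolding Eucl_sub[OF sub]
  proof (rule continuous_imp_homeomorphic_map)
    show "continuous_map (top_of_set (closed_disc d)) (top_of_set (h ` closed_disc d)) h"
      using hc by (simp add: continuous_map_in_subtopology)
    show "compact_space (top_of_set (closed_disc d))"
      using cd by (simp add: compact_space_subtopology compactin_euclidean_iff)
    show "Hausdorff_space (top_of_set (h ` closed_disc d))"
      by (rule Hausdorff_space_subtopology) (simp add: Hausdorff_space_euclidean)
  qed (use hi in auto)
  show "compact (h ` closed_disc d)" using compact_continuous_image[OF hc cd] .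
  show "h ` open_disc d \<subseteq> h ` closed_disc d" using open_closed_disc by blast
  have "closure (open_disc d) \<subseteq> closed_disc d"
    using closure_minimal[OF open_closed_disc compact_imp_closed[OF cd]] .
  then have "h ` closure (open_disc d) \<subseteq> closure (h ` open_disc d)"
    by (rule continuous_image_closure_subset[OF hc])
  then show "h ` closed_disc d \<subseteq> closure (h ` open_disc d)"
    using closed_disc_closure by blast
qed

definition bs :: "nat \<Rightarrow> nat \<Rightarrow> nat \<Rightarrow> real \<Rightarrow> nat \<Rightarrow> real" where
  "bs a mm b u = (\<lambda>i. max 0 (-u) * dl a i + (1 - \<bar>u\<bar>) * dl mm i + max 0 u * dl b i)"

definition edgeh :: "nat \<Rightarrow> nat \<Rightarrow> nat \<Rightarrow> (nat \<Rightarrow> real) \<Rightarrow> nat \<Rightarrow> real" where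
  "edgeh a mm b x = bs a mm b (x 0)"

lemma edgeh_cont: "continuous_on S (edgeh a mm b)"
  unfolding edgeh_def bs_def
  by (intro continuous_on_coordinatewise_then_product continuous_intros)

lemma bs_neg: "bs a mm b (-u) = bs b mm a u"
  by (rule ext) (simp add: bs_def algebra_simps)

lemma bs_ends: "bs a mm b (-1) = dl a" "bs a mm b 1 = dl b"
  by (rule ext, simp add: bs_def)+

lemma bs_mid: "mm \<noteq> a \<Longrightarrow> mm \<noteq> b \<Longrightarrow> bs a mm b u mm = 1 - \<bar>u\<bar>"
  by (simp add: bs_def dl_def)

lemma bs_b: "b \<noteq> a \<Longrightarrow> b \<noteq> mm \<Longrightarrow> bs a mm b u b = max 0 u"
  by (simp add: bs_def dl_def)

lemma bs_supp: "bs a mm b u i \<noteq> 0 \<Longrightarrow> i \<in> {a, mm, b}"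
  by (auto simp: bs_def dl_def split: if_splits)

lemma open_disc_1_img: "open_disc 1 = (\<lambda>u. emb u 0) ` {-1<..<1}"
proof
  show "open_disc 1 \<subseteq> (\<lambda>u. emb u 0) ` {-1<..<1}"
  proof
    fix x assume "x \<in> open_disc 1"
    then have z: "\<forall>i\<ge>1. x i = 0" and s: "(x 0)\<^sup>2 < 1" using open_disc_1 by blast+
    have "x = emb (x 0) 0" by (rule emb_eq) (use z in auto)
    moreover have "\<bar>x 0\<bar> < 1" using s abs_square_less_1 by blast
    then have "x 0 \<in> {-1<..<1}" by (simp add: abs_less_iff)
    ultimately show "x \<in> (\<lambda>u. emb u 0) ` {-1<..<1}" by blast
  qed
  show "(\<lambda>u. emb u 0) ` {-1<..<1} \<subseteq> open_disc 1"
  proof (rule image_subsetI)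
    fix u :: real assume "u \<in> {-1<..<1}"
    then have "u\<^sup>2 < 1" by (simp add: abs_square_less_1 abs_less_iff)
    then show "emb u 0 \<in> open_disc 1" unfolding open_disc_1 by (simp add: emb_def)
  qed
qed

lemma edgeh_closed: "edgeh a mm b ` closed_disc 1 = bs a mm b ` {-1..1}"
  unfolding closed_disc_1_img image_image edgeh_def by (simp add: emb_def)

lemma edgeh_open: "edgeh a mm b ` open_disc 1 = bs a mm b ` {-1<..<1}"
  unfolding open_disc_1_img image_image edgeh_def by (simp add: emb_def)

lemma edgeh_inj:
  assumes "a \<noteq> mm" "a \<noteq> b" "mm \<noteq> b"
  shows "inj_on (edgeh a mm b) (closed_disc 1)"
proof
  fix x y assume x: "x \<in> closed_disc 1" and y: "y \<in> closed_disc 1" and eq: "edgeh a mm b x = edgeh a mm b y"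
  have "\<bar>x 0\<bar> = \<bar>y 0\<bar>" using fun_cong[OF eq, of mm] bs_mid[of mm a b] assms by (simp add: edgeh_def)
  moreover have "max 0 (x 0) = max 0 (y 0)" using fun_cong[OF eq, of b] bs_b[of b a mm] assms by (simp add: edgeh_def)
  ultimately have "x 0 = y 0" by (auto simp: abs_if max_def split: if_splits)
  moreover have "\<forall>i\<ge>1. x i = 0" "\<forall>i\<ge>1. y i = 0" using x y closed_disc_1 by blast+
  ultimately show "x = y" by (metis emb_eq le_numeral_extra(4) one_le_numeral order_trans)
qed

definition Pk :: "(nat \<Rightarrow> nat) \<Rightarrow> (nat \<Rightarrow> nat) \<Rightarrow> nat \<Rightarrow> nat" where
  "Pk Vv M n = (if even n then Vv (n div 2) else M (n div 2))"

lemma Fq_one: "Fq m a P 1 n t = (\<lambda>i. (1 - t) * dl (P n) i + t * dl (P (Suc n mod m)) i)"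
  by (simp add: Fq_def)

lemma loop_eq:
  assumes k: "k \<ge> 2"
  shows "{Fq (2*k) ap (Pk Vv M) 1 n t | n t. n < 2*k \<and> 0 \<le> t \<and> t < 1}
       = (\<Union>j<k. bs (Vv j) (M j) (Vv (Suc j mod k)) ` {-1..1})"
proof
  show "{Fq (2*k) ap (Pk Vv M) 1 n t | n t. n < 2*k \<and> 0 \<le> t \<and> t < 1} \<subseteq> (\<Union>j<k. bs (Vv j) (M j) (Vv (Suc j mod k)) ` {-1..1})"
  proof
    fix y assume "y \<in> {Fq (2*k) ap (Pk Vv M) 1 n t | n t. n < 2*k \<and> 0 \<le> t \<and> t < 1}"
    then obtain n t where nt: "n < 2*k" "0 \<le> t" "t < 1" and y: "y = Fq (2*k) ap (Pk Vv M) 1 n t" by blast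
    define j where "j = n div 2"
    have jk: "j < k" using nt by (simp add: j_def)
    show "y \<in> (\<Union>j<k. bs (Vv j) (M j) (Vv (Suc j mod k)) ` {-1..1})"
    proof (cases "even n")
      case True
      then have n: "n = 2 * j" by (simp add: j_def)
      have sn: "Suc n mod (2*k) = 2 * j + 1" using n nt by simp
      have "y = bs (Vv j) (M j) (Vv (Suc j mod k)) (t - 1)"
        unfolding y Fq_one sn using n nt by (simp add: bs_def Pk_def max_def abs_if)
      moreover have "t - 1 \<in> {-1..1}" using nt by simp
      ultimately show ?thesis using jk by blast
    next
      case False
      then have n: "n = 2 * j + 1" by (simp add: j_def)
      have sn: "Suc n mod (2*k) = 2 * (Suc j mod k)"
      proof (cases "Suc j < k")
        case True then show ?thesis using n by simp
      next
        case False then have sj: "Suc j = k" using jk by simp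
        then have e: "Suc n = 2 * k" using n by simp
        have "Suc n mod (2 * k) = 0" by (simp only: e mod_self)
        moreover have "Suc j mod k = 0" using sj by simp
        ultimately show ?thesis by simp
      qed
      have "y = bs (Vv j) (M j) (Vv (Suc j mod k)) t"
        unfolding y Fq_one sn using n nt by (simp add: bs_def Pk_def max_def abs_if)
      moreover have "t \<in> {-1..1}" using nt by simp
      ultimately show ?thesis using jk by blast
    qed
  qed
  show "(\<Union>j<k. bs (Vv j) (M j) (Vv (Suc j mod k)) ` {-1..1}) \<subseteq> {Fq (2*k) ap (Pk Vv M) 1 n t | n t. n < 2*k \<and> 0 \<le> t \<and> t < 1}"
  proof
    fix y assume "y \<in> (\<Union>j<k. bs (Vv j) (M j) (Vv (Suc j mod k)) ` {-1..1})"
    then obtain j u where ju: "j < k" "u \<in> {-1..1}" and y: "y = bs (Vv j) (M j) (Vv (Suc j mod k)) u" by blast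
    consider "u < 0" | "0 \<le> u" "u < 1" | "u = 1" using ju by fastforce
    then show "y \<in> {Fq (2*k) ap (Pk Vv M) 1 n t | n t. n < 2*k \<and> 0 \<le> t \<and> t < 1}"
    proof cases
      case 1
      have sn: "Suc (2 * j) mod (2*k) = 2 * j + 1" using ju by simp
      have "y = Fq (2*k) ap (Pk Vv M) 1 (2 * j) (u + 1)"
        unfolding y Fq_one sn using 1 ju by (simp add: bs_def Pk_def max_def abs_if add.commute)
      moreover have "2 * j < 2 * k" "0 \<le> u + 1" "u + 1 < 1" using 1 ju by auto
      ultimately show ?thesis by blast
    next
      case 2
      have sn: "Suc (2 * j + 1) mod (2*k) = 2 * (Suc j mod k)"
      proof (cases "Suc j < k")
        case True then show ?thesis by simp
      next
        case False then have sj: "Suc j = k" using ju by simp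
        then have e: "Suc (2 * j + 1) = 2 * k" by simp
        have "Suc (2 * j + 1) mod (2 * k) = 0" by (simp only: e mod_self)
        moreover have "Suc j mod k = 0" using sj by simp
        ultimately show ?thesis by simp
      qed
      have "y = Fq (2*k) ap (Pk Vv M) 1 (2 * j + 1) u"
        unfolding y Fq_one sn using 2 ju by (simp add: bs_def Pk_def max_def abs_if)
      moreover have "2 * j + 1 < 2 * k" using ju by simp
      ultimately show ?thesis using 2 by blast
    next
      case 3
      have "y = dl (Vv (Suc j mod k))" using 3 y bs_ends by simp
      also have "\<dots> = Fq (2*k) ap (Pk Vv M) 1 (2 * (Suc j mod k)) 0"
        unfolding Fq_one by (simp add: Pk_def)
      finally have "y = Fq (2*k) ap (Pk Vv M) 1 (2 * (Suc j mod k)) 0" .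
      moreover have "2 * (Suc j mod k) < 2 * k" using ju by simp
      ultimately show ?thesis by fastforce
    qed
  qed
qed

lemma Fq_supp: "Fq m a P r n t i \<noteq> 0 \<Longrightarrow> i = a \<or> i = P n \<or> i = P (Suc n mod m)"
  by (auto simp: Fq_def dl_def split: if_splits)

locale gr =
  fixes V :: "'v set" and E :: "'e set" and src tgt :: "'e \<Rightarrow> 'v" and rv :: "'e \<Rightarrow> 'e"
    and nabla :: "'e \<Rightarrow> 'e \<Rightarrow> 'e"
  assumes finV: "finite V" and finE: "finite E"
    and G: "\<And>e. e \<in> E \<Longrightarrow> src e \<in> V \<and> tgt e \<in> V \<and> src e \<noteq> tgt e \<and> rv e \<in> E \<and> rv (rv e) = e
              \<and> src (rv e) = tgt e \<and> tgt (rv e) = src e"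
    and N: "\<And>e. e \<in> E \<Longrightarrow> nabla e e = rv e"
begin

abbreviation isF where "isF i q \<equiv> is_face V E src tgt rv nabla i q"

lemma isF_D:
  assumes "isF i (W, F)"
  shows "W \<subseteq> V" "F \<subseteq> E" "\<And>e. e \<in> F \<Longrightarrow> src e \<in> W" "\<And>e. e \<in> F \<Longrightarrow> tgt e \<in> W"
    "\<And>e. e \<in> F \<Longrightarrow> rv e \<in> F" "W \<noteq> {}" "\<And>x y. x \<in> W \<Longrightarrow> y \<in> W \<Longrightarrow> (x, y) \<in> (edge_rel F src tgt)\<^sup>*"
    "\<And>w. w \<in> W \<Longrightarrow> card (out_edges F src w) = i" "finite F"
  using assms finite_subset[OF _ finE] unfolding is_face_def connected_on_def by (auto simp: Let_def)

lemma out_finite: "F \<subseteq> E \<Longrightarrow> finite (out_edges F src w)"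
  unfolding out_edges_def using finE by (auto intro: finite_subset)

lemma face0:
  assumes "isF 0 q" shows "\<exists>v\<in>V. q = ({v}, {})"
proof -
  obtain W F where q: "q = (W, F)" by force
  note D = isF_D[OF assms[unfolded q]]
  have F: "F = {}"
  proof (rule ccontr)
    assume "F \<noteq> {}"
    then obtain e where e: "e \<in> F" by auto
    then have "e \<in> out_edges F src (src e)" by (simp add: out_edges_def)
    moreover have "finite (out_edges F src (src e))" using out_finite D(2) by blast
    ultimately have "card (out_edges F src (src e)) \<noteq> 0" using card_0_eq by blast
    then show False using D(8)[OF D(3)[OF e]] by simp
  qed
  obtain v where v: "v \<in> W" using D(6) by auto
  have "W = {v}"
  proof -
    have "x = v" if "x \<in> W" for x
      using D(7)[OF v that] by (simp add: F edge_rel_def)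
    then show ?thesis using v by blast
  qed
  then show ?thesis using q F D(1) v by blast
qed

lemma face0_intro: "v \<in> V \<Longrightarrow> isF 0 ({v}, {})"
  unfolding is_face_def connected_on_def by (simp add: out_edges_def)

lemma face1:
  assumes "isF 1 q" shows "\<exists>e\<in>E. q = ({src e, tgt e}, {e, rv e})"
proof -
  obtain W F where q: "q = (W, F)" by force
  note D = isF_D[OF assms[unfolded q]]
  obtain w where w: "w \<in> W" using D(6) by auto
  obtain e where oe: "out_edges F src w = {e}" using D(8)[OF w] card_1_singletonE by blast
  then have e: "e \<in> F" "src e = w" by (auto simp: out_edges_def)
  have eE: "e \<in> E" using e D(2) by auto
  note Ge = G[OF eE]
  have re: "rv e \<in> F" using D(5)[OF e(1)] .
  have tW: "tgt e \<in> W" using D(4)[OF e(1)] .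
  obtain f where of: "out_edges F src (tgt e) = {f}" using D(8)[OF tW] card_1_singletonE by blast
  have "rv e \<in> out_edges F src (tgt e)" using re Ge by (simp add: out_edges_def)
  then have of': "out_edges F src (tgt e) = {rv e}" using of by simp
  have step: "z \<in> {src e, tgt e}" if yz: "(y, z) \<in> edge_rel F src tgt" "y \<in> {src e, tgt e}" for y z
  proof -
    obtain g where g: "g \<in> F" "y = src g" "z = tgt g" using yz(1) by (auto simp: edge_rel_def)
    show ?thesis
    proof (cases "y = src e")
      case True
      then have "g \<in> out_edges F src w" using g e by (simp add: out_edges_def)
      then show ?thesis using oe g by simp
    next
      case False
      then have "y = tgt e" using yz(2) by simp
      then have "g \<in> out_edges F src (tgt e)" using g by (simp add: out_edges_def)
      then show ?thesis using of' g Ge by simp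
    qed
  qed
  have WS: "W \<subseteq> {src e, tgt e}"
  proof
    fix x assume "x \<in> W"
    have "(w, x) \<in> (edge_rel F src tgt)\<^sup>*" using D(7)[OF w \<open>x \<in> W\<close>] .
    then show "x \<in> {src e, tgt e}"
      by (induct rule: rtrancl_induct) (use e step in auto)
  qed
  then have W: "W = {src e, tgt e}" using e tW w by auto
  have "F \<subseteq> {e, rv e}"
  proof
    fix g assume g: "g \<in> F"
    then have sg: "src g \<in> {src e, tgt e}" using D(3) W by auto
    show "g \<in> {e, rv e}"
    proof (cases "src g = src e")
      case True then have "g \<in> out_edges F src w" using g e by (simp add: out_edges_def)
      then show ?thesis using oe by auto
    next
      case False then have "src g = tgt e" using sg by simp
      then have "g \<in> out_edges F src (tgt e)" using g by (simp add: out_edges_def)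
      then show ?thesis using of' by auto
    qed
  qed
  then have "F = {e, rv e}" using e re by auto
  then show ?thesis using q W eE by auto
qed

lemma face1_intro:
  assumes eE: "e \<in> E" shows "isF 1 ({src e, tgt e}, {e, rv e})"
proof -
  note Ge = G[OF eE]
  have o1: "out_edges {e, rv e} src (src e) = {e}" using Ge by (auto simp: out_edges_def)
  have o2: "out_edges {e, rv e} src (tgt e) = {rv e}" using Ge by (auto simp: out_edges_def)
  have r1: "(src e, tgt e) \<in> edge_rel {e, rv e} src tgt" by (auto simp: edge_rel_def)
  have r2: "(tgt e, src e) \<in> edge_rel {e, rv e} src tgt" using Ge by (force simp: edge_rel_def)
  show ?thesis
    unfolding is_face_def connected_on_def Let_def fst_conv snd_conv
    using Ge o1 o2 r1 r2 N[OF eE] N[of "rv e"] eE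
    by (auto simp: o1 o2)
qed

end

context gr begin

definition cycprops where
  "cycprops W F k ve ee \<longleftrightarrow> k \<ge> 2 \<and> (\<forall>n. ee n \<in> F) \<and> (\<forall>n. src (ee n) = ve n \<and> tgt (ee n) = ve (Suc n))
    \<and> (\<forall>n. ee (n mod k) = ee n \<and> ve (n mod k) = ve n) \<and> inj_on ve {..<k} \<and> inj_on ee {..<k}
    \<and> W = ve ` {..<k} \<and> F = ee ` {..<k} \<union> rv ` ee ` {..<k} \<and> (\<forall>i j. rv (ee i) \<noteq> ee j)
    \<and> (\<forall>n. out_edges F src (ve (Suc n)) = {ee (Suc n), rv (ee n)})"

lemma card2_eq: "finite S \<Longrightarrow> card S = 2 \<Longrightarrow> x \<in> S \<Longrightarrow> y \<in> S \<Longrightarrow> x \<noteq> y \<Longrightarrow> S = {x, y}"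
  by (metis card_2_iff card_subset_eq empty_subsetI insert_subset)

lemma face2_cycle:
  assumes F2: "isF 2 (W, F)" shows "\<exists>k ve ee. cycprops W F k ve ee"
proof -
  note D = isF_D[OF F2]
  define out where "out w = out_edges F src w" for w
  have outfin: "finite (out w)" for w using out_finite[OF D(2)] by (simp add: out_def)
  have outc: "w \<in> W \<Longrightarrow> card (out w) = 2" for w using D(8) by (simp add: out_def)
  have GF: "g \<in> F \<Longrightarrow> src g \<in> V \<and> tgt g \<in> V \<and> src g \<noteq> tgt g \<and> rv g \<in> E \<and> rv (rv g) = g
              \<and> src (rv g) = tgt g \<and> tgt (rv g) = src g" for g using G D(2) by blast
  have rvF: "g \<in> F \<Longrightarrow> rv g \<in> F" for g using D(5) .
  have rvne: "g \<in> F \<Longrightarrow> rv g \<noteq> g" for g using GF by metis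
  have uniq: "g1 = g2" if u: "w \<in> W" "g \<in> out w" "g1 \<in> out w" "g2 \<in> out w" "g1 \<noteq> g" "g2 \<noteq> g" for w g g1 g2
  proof -
    obtain x y where "out w = {x, y}" "x \<noteq> y" using outc[OF u(1)] card_2_iff by metis
    then show ?thesis using u by auto
  qed
  have other: "\<exists>g'. g' \<in> out w \<and> g' \<noteq> g" if u: "w \<in> W" for w g
  proof -
    obtain x y where "out w = {x, y}" "x \<noteq> y" using outc[OF u(1)] card_2_iff by metis
    then show ?thesis by auto
  qed
  define \<sigma> where "\<sigma> g = (THE g'. g' \<in> out (tgt g) \<and> g' \<noteq> rv g)" for g
  have rvout: "g \<in> F \<Longrightarrow> rv g \<in> out (tgt g)" for g using rvF GF by (simp add: out_def out_edges_def)
  have \<sigma>: "\<sigma> g \<in> out (tgt g) \<and> \<sigma> g \<noteq> rv g" if g: "g \<in> F" for g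
  proof -
    obtain g' where g': "g' \<in> out (tgt g)" "g' \<noteq> rv g" using other D(4)[OF g] by blast
    show ?thesis unfolding \<sigma>_def
      by (rule theI[of _ g']) (use g' uniq[OF D(4)[OF g] rvout[OF g]] in blast)+
  qed
  have \<sigma>u: "g' = \<sigma> g" if "g \<in> F" "g' \<in> out (tgt g)" "g' \<noteq> rv g" for g g'
    using uniq[OF D(4)[OF that(1)] rvout[OF that(1)] that(2) _ that(3)] \<sigma>[OF that(1)] by blast
  have \<sigma>F: "\<sigma> g \<in> F" "src (\<sigma> g) = tgt g" if "g \<in> F" for g
    using \<sigma>[OF that] by (auto simp: out_def out_edges_def)
  have \<sigma>rv: "\<sigma> (rv (\<sigma> g)) = rv g" if g: "g \<in> F" for g
  proof -
    have f: "rv (\<sigma> g) \<in> F" using rvF \<sigma>F[OF g] by blast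
    have "rv g \<in> out (tgt (rv (\<sigma> g)))"
      using rvout[OF g] GF[OF \<sigma>F(1)[OF g]] \<sigma>F(2)[OF g] by simp
    moreover have "rv g \<noteq> rv (rv (\<sigma> g))"
    proof -
      have "rv (rv (\<sigma> g)) = \<sigma> g" using GF[OF \<sigma>F(1)[OF g]] by blast
      then show ?thesis using \<sigma>[OF g] by metis
    qed
    ultimately show ?thesis using \<sigma>u[OF f] by simp
  qed
  have \<sigma>inj: "g = g'" if "g \<in> F" "g' \<in> F" "\<sigma> g = \<sigma> g'" for g g'
    using \<sigma>rv[OF that(1)] \<sigma>rv[OF that(2)] that(3) GF[OF that(1)] GF[OF that(2)] by metis
  obtain w0 where w0: "w0 \<in> W" using D(6) by auto
  obtain e0 where e0: "e0 \<in> out w0" using other[OF w0] by blast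
  then have e0F: "e0 \<in> F" by (simp add: out_def out_edges_def)
  define ee where "ee n = (\<sigma> ^^ n) e0" for n
  have eeS: "ee (Suc n) = \<sigma> (ee n)" for n by (simp add: ee_def)
  have eeF: "ee n \<in> F" for n by (induct n) (simp_all add: ee_def e0F \<sigma>F)
  have cancel: "ee (a + i) = ee (b + i) \<Longrightarrow> ee a = ee b" for a b i
  proof (induct i)
    case (Suc i)
    then show ?case using \<sigma>inj[OF eeF eeF] eeS by (metis add_Suc_right)
  qed simp
  have "\<not> inj ee"
  proof
    assume "inj ee"
    moreover have "range ee \<subseteq> F" using eeF by auto
    ultimately show False using D(9) finite_subset infinite_UNIV_nat finite_imageD by (metis)
  qed
  then obtain i j where ij: "i < j" "ee i = ee j"
    by (metis inj_def linorder_neqE_nat)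
  have "ee 0 = ee (j - i)" using cancel[of 0 i "j - i"] ij by simp
  then have exper: "\<exists>p. 0 < p \<and> ee p = ee 0" using ij by (intro exI[of _ "j - i"]) simp
  define k where "k = (LEAST p. 0 < p \<and> ee p = ee 0)"
  have k: "0 < k" "ee k = ee 0" using LeastI_ex[OF exper] by (simp_all add: k_def)
  have kmin: "ee p \<noteq> ee 0" if "0 < p" "p < k" for p using not_less_Least[of p] that by (auto simp: k_def)
  have eeadd: "ee (n + k) = ee n" for n
  proof -
    have "ee (n + k) = (\<sigma> ^^ n) (ee k)" by (simp add: ee_def funpow_add)
    also have "\<dots> = ee n" using k(2) by (simp add: ee_def)
    finally show ?thesis .
  qed
  have eemult: "ee (a + k * q) = ee a" for a q
    by (induct q) (simp_all, metis add.assoc add.commute eeadd)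
  have eemod: "ee (n mod k) = ee n" for n using eemult[of "n mod k" "n div k"] by simp
  have eeinj: "inj_on ee {..<k}"
  proof (rule inj_onI)
    fix a b assume ab: "a \<in> {..<k}" "b \<in> {..<k}" "ee a = ee b"
    show "a = b"
    proof (rule ccontr)
      assume "a \<noteq> b"
      then consider "a < b" | "b < a" by linarith
      then show False
      proof cases
        case 1
        then have "ee 0 = ee (b - a)" using cancel[of 0 a "b - a"] ab by simp
        moreover have "0 < b - a" "b - a < k" using 1 ab by auto
        ultimately show False using kmin by metis
      next
        case 2
        then have "ee 0 = ee (a - b)" using cancel[of 0 b "a - b"] ab by simp
        moreover have "0 < a - b" "a - b < k" using 2 ab by auto
        ultimately show False using kmin by metis
      qed
    qed
  qed
  have k2: "k \<ge> 2"
  proof (rule ccontr)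
    assume "\<not> k \<ge> 2"
    then have "k = 1" using k(1) by simp
    then have "\<sigma> e0 = e0" using k(2) eeS[of 0] by (simp add: ee_def)
    then show False using \<sigma>F(2)[OF e0F] GF[OF e0F] by simp
  qed
  define ve where "ve n = src (ee n)" for n
  have vt: "src (ee n) = ve n \<and> tgt (ee n) = ve (Suc n)" for n
    using \<sigma>F(2)[OF eeF] eeS by (simp add: ve_def)
  have vemod: "ve (n mod k) = ve n" for n by (simp add: ve_def eemod)
  have step: "rv (ee a) = ee (Suc b)" if "rv (ee (Suc a)) = ee b" for a b
    using that eeS \<sigma>rv[OF eeF] by metis
  have gen: "rv (ee (a + t)) = ee b \<Longrightarrow> rv (ee a) = ee (b + t)" for a b t
  proof (induct t arbitrary: b)
    case (Suc t)
    have "rv (ee (a + t)) = ee (Suc b)" using step Suc.prems by simp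
    then show ?case using Suc.hyps by simp
  qed simp
  have norefl: "rv (ee i) \<noteq> ee j" for i j
  proof
    assume r: "rv (ee i) = ee j"
    define N where "N = i + k * (j + 1)"
    have "ee N = ee i" unfolding N_def by (rule eemult)
    then have rN: "rv (ee N) = ee j" using r by simp
    have "1 * (j + 1) \<le> k * (j + 1)" by (rule mult_le_mono1) (use k(1) in simp)
    then have "j + 1 \<le> k * (j + 1)" by (simp only: mult_1)
    then have "N > j" unfolding N_def by linarith
    show False
    proof (cases "even (N - j)")
      case True
      then obtain t where t: "N - j = 2 * t" by blast
      then have "N = (j + t) + t" using \<open>N > j\<close> by simp
      then have "rv (ee (j + t)) = ee (j + t)" using gen[of "j + t" t j] rN by simp
      then show False using rvne[OF eeF] by metis
    next
      case False
      then obtain t where t: "N - j = 2 * t + 1" by (metis oddE)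
      then have "N = (j + t + 1) + t" using \<open>N > j\<close> by simp
      then have "rv (ee (j + t + 1)) = ee (j + t)" using gen[of "j + t + 1" t j] rN by simp
      then have "\<sigma> (ee (j + t)) = rv (ee (j + t))"
        using eeS[of "j + t"] GF[OF eeF[of "j + t + 1"]] by simp
      then show False using \<sigma>[OF eeF] by metis
    qed
  qed
  have veW: "ve n \<in> W" for n using D(3)[OF eeF] by (simp add: ve_def)
  have outS: "out (ve (Suc n)) = {ee (Suc n), rv (ee n)}" for n
  proof (rule card2_eq[OF outfin outc[OF veW]])
    show "ee (Suc n) \<in> out (ve (Suc n))" using eeF vt by (simp add: out_def out_edges_def)
    show "rv (ee n) \<in> out (ve (Suc n))" using rvF[OF eeF] GF[OF eeF] vt by (simp add: out_def out_edges_def)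
    show "ee (Suc n) \<noteq> rv (ee n)" using norefl by metis
  qed
  have vesuc: "\<exists>p. ve n = ve (Suc p)" for n
  proof -
    have "ve n = ve (n + k)" using vemod by (metis mod_add_self2)
    then show ?thesis using k(1) by (metis add_Suc_right Suc_pred)
  qed
  have rangeve: "range ve = ve ` {..<k}"
  proof
    show "range ve \<subseteq> ve ` {..<k}"
    proof
      fix x assume "x \<in> range ve"
      then obtain n where "x = ve n" by auto
      then show "x \<in> ve ` {..<k}" using vemod[of n] k(1) by (metis lessThan_iff mod_less_divisor imageI)
    qed
  qed auto
  have Wv: "W = ve ` {..<k}"
  proof
    show "ve ` {..<k} \<subseteq> W" using veW by auto
    show "W \<subseteq> ve ` {..<k}"
    proof
      fix w assume w: "w \<in> W"
      have "(ve 0, w) \<in> (edge_rel F src tgt)\<^sup>*" using D(7)[OF veW w] .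
      then have "w \<in> range ve"
      proof (induct rule: rtrancl_induct)
        case (step y z)
        obtain g where g: "g \<in> F" "y = src g" "z = tgt g" using step(2) by (auto simp: edge_rel_def)
        obtain n where "y = ve n" using step(3) by auto
        then obtain p where p: "src g = ve (Suc p)" using vesuc g by metis
        then have "g \<in> out (ve (Suc p))" using g by (simp add: out_def out_edges_def)
        then have "g = ee (Suc p) \<or> g = rv (ee p)" using outS by auto
        then show ?case using g vt GF[OF eeF[of p]] by (metis rangeI)
      qed simp
      then show "w \<in> ve ` {..<k}" using rangeve by simp
    qed
  qed
  have eemodI: "ee n \<in> ee ` {..<k}" for n using eemod[of n] k(1) by (metis lessThan_iff mod_less_divisor imageI)
  have Fe: "F = ee ` {..<k} \<union> rv ` ee ` {..<k}"
  proof
    show "ee ` {..<k} \<union> rv ` ee ` {..<k} \<subseteq> F" using eeF rvF by auto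
    show "F \<subseteq> ee ` {..<k} \<union> rv ` ee ` {..<k}"
    proof
      fix g assume g: "g \<in> F"
      then have "src g \<in> W" using D(3) by simp
      then obtain n where "src g = ve n" using Wv by auto
      then obtain p where p: "src g = ve (Suc p)" using vesuc by metis
      then have "g \<in> out (ve (Suc p))" using g by (simp add: out_def out_edges_def)
      then have "g = ee (Suc p) \<or> g = rv (ee p)" using outS by auto
      then show "g \<in> ee ` {..<k} \<union> rv ` ee ` {..<k}" using eemodI by blast
    qed
  qed
  have cardF: "card F = 2 * card W"
  proof -
    have "F = (\<Union>w\<in>W. out w)" using D(3) by (auto simp: out_def out_edges_def)
    moreover have "card (\<Union>w\<in>W. out w) = (\<Sum>w\<in>W. card (out w))"
      by (rule card_UN_disjoint) (use finite_subset[OF D(1) finV] outfin in \<open>auto simp: out_def out_edges_def\<close>)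
    moreover have "(\<Sum>w\<in>W. card (out w)) = 2 * card W" using outc by simp
    ultimately show ?thesis by simp
  qed
  have rvinj: "inj_on rv F" by (rule inj_onI) (metis GF)
  have cardE: "card (ee ` {..<k} \<union> rv ` ee ` {..<k}) = 2 * k"
  proof -
    have c1: "card (ee ` {..<k}) = k" using card_image[OF eeinj] by simp
    have "inj_on rv (ee ` {..<k})" using inj_on_subset[OF rvinj] eeF by blast
    then have c2: "card (rv ` ee ` {..<k}) = k" using card_image c1 by metis
    have "ee ` {..<k} \<inter> rv ` ee ` {..<k} = {}" using norefl by (auto simp: eq_commute[of "ee _"])
    then show ?thesis using c1 c2 card_Un_disjoint[of "ee ` {..<k}" "rv ` ee ` {..<k}"] by simp
  qed
  have "card (ve ` {..<k}) = k" using cardF cardE Fe Wv by simp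
  then have veinj: "inj_on ve {..<k}" using eq_card_imp_inj_on[of "{..<k}" ve] by simp
  have "cycprops W F k ve ee"
    unfolding cycprops_def using k2 eeF vt eemod vemod veinj eeinj Wv Fe norefl outS
    by (simp add: out_def)
  then show ?thesis by blast
qed

end

context gr begin

definition vf :: "'v \<Rightarrow> 'v set \<times> 'e set" where "vf v = ({v}, {})"
definition ef :: "'e \<Rightarrow> 'v set \<times> 'e set" where "ef e = ({src e, tgt e}, {e, rv e})"

abbreviation SS where "SS \<equiv> S2 V E src tgt rv nabla"

lemma ef_rv: "e \<in> E \<Longrightarrow> ef (rv e) = ef e"
  using G[of e] by (auto simp: ef_def)

lemma vf_S2: "v \<in> V \<Longrightarrow> vf v \<in> SS"
  unfolding S2_def vf_def using face0_intro by force

lemma ef_S2: "e \<in> E \<Longrightarrow> ef e \<in> SS"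
proof -
  assume "e \<in> E"
  then have "isF 1 (ef e)" using face1_intro by (simp add: ef_def)
  then show ?thesis unfolding S2_def by (intro CollectI exI[of _ 1]) simp
qed

lemma F2_S2: "isF 2 q \<Longrightarrow> q \<in> SS"
  unfolding S2_def by force

lemma S2_cases:
  assumes "q \<in> SS"
  obtains (V) v where "v \<in> V" "q = vf v" | (E) e where "e \<in> E" "q = ef e" | (F2) "isF 2 q"
proof -
  obtain i where i: "i \<le> 2" "isF i q" using assms by (auto simp: S2_def)
  then consider "i = 0" | "i = 1" | "i = 2" by linarith
  then show ?thesis
  proof cases
    case 1 then show ?thesis using face0[of q] i that(1) by (auto simp: vf_def)
  next
    case 2 then show ?thesis using face1[of q] i that(2) by (auto simp: ef_def)
  next
    case 3 then show ?thesis using i that(3) by simp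
  qed
qed

lemma cyc_three:
  assumes "cycprops W F k ve ee"
  shows "ee 0 \<in> F" "ee 1 \<in> F" "rv (ee 0) \<in> F" "ee 0 \<noteq> ee 1" "rv (ee 0) \<noteq> ee 0" "rv (ee 0) \<noteq> ee 1"
proof -
  have k: "k \<ge> 2" and inj: "inj_on ee {..<k}" and nr: "\<forall>i j. rv (ee i) \<noteq> ee j" and F: "F = ee ` {..<k} \<union> rv ` ee ` {..<k}"
    and eF: "\<forall>n. ee n \<in> F"
    using assms by (auto simp: cycprops_def)
  show "ee 0 \<in> F" "ee 1 \<in> F" using eF by auto
  show "rv (ee 0) \<in> F" using F k by auto
  show "ee 0 \<noteq> ee 1"
  proof
    assume "ee 0 = ee 1"
    moreover have "(0::nat) \<in> {..<k}" "(1::nat) \<in> {..<k}" using k by auto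
    ultimately have "(0::nat) = 1" using inj_onD[OF inj] by blast
    then show False by simp
  qed
  show "rv (ee 0) \<noteq> ee 0" "rv (ee 0) \<noteq> ee 1" using nr by auto
qed

lemma F2_card:
  assumes "isF 2 (W, F)"
  shows "F \<noteq> {}" "card F \<ge> 3" "card F \<noteq> 2" "\<And>e. F \<noteq> {e, rv e}"
proof -
  obtain k ve ee where c: "cycprops W F k ve ee" using face2_cycle[OF assms] by blast
  note t = cyc_three[OF c]
  show "F \<noteq> {}" using t by auto
  have fin: "finite F" using isF_D(9)[OF assms] .
  have "card {ee 0, ee 1, rv (ee 0)} = 3" using t by auto
  moreover have "card {ee 0, ee 1, rv (ee 0)} \<le> card F" using t fin by (intro card_mono) auto
  ultimately show c3: "card F \<ge> 3" by linarith
  then show "card F \<noteq> 2" by linarith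
  have "card {e, rv e} \<le> 2" for e by (simp add: card_insert_if)
  then show "F \<noteq> {e, rv e}" for e using c3 by (metis not_less_eq_eq numeral_2_eq_2 numeral_3_eq_3)
qed

lemma face2_sub:
  assumes F2: "isF 2 (W, F)" and c: "cycprops W F k ve ee" and F2': "isF 2 (W', F')"
    and sub: "W' \<subseteq> W" "F' \<subseteq> F"
  shows "W' = W \<and> F' = F"
proof -
  note D' = isF_D[OF F2']
  note D = isF_D[OF F2]
  have k: "k \<ge> 2" and eF: "\<forall>n. ee n \<in> F" and vt: "\<forall>n. src (ee n) = ve n \<and> tgt (ee n) = ve (Suc n)"
    and md: "\<forall>n. ee (n mod k) = ee n \<and> ve (n mod k) = ve n"
    and Fe: "F = ee ` {..<k} \<union> rv ` ee ` {..<k}"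
    and outS: "\<forall>n. out_edges F src (ve (Suc n)) = {ee (Suc n), rv (ee n)}"
    using c by (auto simp: cycprops_def)
  obtain w where w: "w \<in> W'" using D'(6) by auto
  have "card (out_edges F' src w) = 2" using D'(8)[OF w] .
  then obtain g where g: "g \<in> out_edges F' src w" by (metis card.empty ex_in_conv zero_neq_numeral)
  then have gF': "g \<in> F'" by (simp add: out_edges_def)
  obtain j where j: "ee j \<in> F'"
  proof -
    have "g \<in> F" using gF' sub by auto
    then obtain i where "g = ee i \<or> g = rv (ee i)" using Fe by auto
    then show ?thesis using that gF' D'(5) G eF D(2) by (metis subsetD)
  qed
  have stepF: "ee (j + t) \<in> F'" for t
  proof (induct t)
    case (Suc t)
    let ?n = "j + t"
    have "ve (Suc ?n) \<in> W'" using D'(4)[OF Suc] vt by simp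
    then have c2: "card (out_edges F' src (ve (Suc ?n))) = 2" using D'(8) by blast
    have "out_edges F' src (ve (Suc ?n)) \<subseteq> {ee (Suc ?n), rv (ee ?n)}"
      using outS sub by (auto simp: out_edges_def)
    moreover have "finite {ee (Suc ?n), rv (ee ?n)}" by simp
    moreover have "card {ee (Suc ?n), rv (ee ?n)} \<le> 2" by (simp add: card_insert_le_m1)
    ultimately have "out_edges F' src (ve (Suc ?n)) = {ee (Suc ?n), rv (ee ?n)}"
      using c2 by (metis card_seteq)
    then show ?case by (auto simp: out_edges_def)
  qed (use j in simp)
  have allF': "ee i \<in> F'" for i
  proof -
    have "1 * j \<le> k * j" using k by (intro mult_le_mono1) simp
    then have "j \<le> i + k * j" by (simp only: mult_1)
    then have "i + k * j = j + (i + k * j - j)" by (simp only: le_add_diff_inverse)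
    then have "ee (i + k * j) \<in> F'" using stepF by metis
    moreover have "ee (i + k * j) = ee i" using md by (metis mod_mult_self2)
    ultimately show ?thesis by simp
  qed
  have "F \<subseteq> F'" using Fe allF' D'(5) by auto
  then have FF: "F' = F" using sub by auto
  have "W \<subseteq> W'"
  proof
    fix x assume "x \<in> W"
    then obtain i where "x = ve i" using c by (auto simp: cycprops_def)
    then show "x \<in> W'" using D'(3)[OF allF'] vt by metis
  qed
  then show ?thesis using FF sub by auto
qed


lemma split_r:
  "{f r n t | r n t. 0 \<le> (r::real) \<and> r \<le> 1 \<and> Q n t} =
   {f r n t | r n t. 0 \<le> r \<and> r < 1 \<and> Q n t} \<union> {f 1 n t | n t. Q n t}"
proof (rule set_eqI, rule iffI)
  fix y assume "y \<in> {f r n t | r n t. 0 \<le> (r::real) \<and> r \<le> 1 \<and> Q n t}"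
  then obtain r n t where rnt: "0 \<le> r" "r \<le> 1" "Q n t" "y = f r n t" by blast
  show "y \<in> {f r n t | r n t. 0 \<le> r \<and> r < 1 \<and> Q n t} \<union> {f 1 n t | n t. Q n t}"
  proof (cases "r < 1")
    case True then show ?thesis using rnt by blast
  next
    case False then have "r = 1" using rnt by simp
    then show ?thesis using rnt by blast
  qed
next
  fix y assume "y \<in> {f r n t | r n t. 0 \<le> r \<and> r < 1 \<and> Q n t} \<union> {f 1 n t | n t. Q n t}"
  then show "y \<in> {f r n t | r n t. 0 \<le> (r::real) \<and> r \<le> 1 \<and> Q n t}"
  proof
    assume "y \<in> {f r n t | r n t. 0 \<le> r \<and> r < 1 \<and> Q n t}"
    then obtain r n t where "0 \<le> r" "r < 1" "Q n t" "y = f r n t" by blast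
    then show ?thesis by (metis (mono_tags, lifting) less_eq_real_def mem_Collect_eq)
  next
    assume "y \<in> {f 1 n t | n t. Q n t}"
    then obtain n t where "Q n t" "y = f 1 n t" by blast
    then show ?thesis by (metis (mono_tags, lifting) mem_Collect_eq order_refl zero_le_one)
  qed
qed

definition cyc :: "'v set \<times> 'e set \<Rightarrow> nat \<times> (nat \<Rightarrow> 'v) \<times> (nat \<Rightarrow> 'e)" where
  "cyc q = (SOME p. cycprops (fst q) (snd q) (fst p) (fst (snd p)) (snd (snd p)))"

lemma cyc: "isF 2 q \<Longrightarrow> cycprops (fst q) (snd q) (fst (cyc q)) (fst (snd (cyc q))) (snd (snd (cyc q)))"
proof -
  assume "isF 2 q"
  then obtain k ve ee where "cycprops (fst q) (snd q) k ve ee" using face2_cycle[of "fst q" "snd q"] by auto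
  then have "\<exists>p. cycprops (fst q) (snd q) (fst p) (fst (snd p)) (snd (snd p))" by (intro exI[of _ "(k, ve, ee)"]) simp
  then show ?thesis unfolding cyc_def by (rule someI_ex)
qed

definition dd :: "'v set \<times> 'e set \<Rightarrow> nat" where
  "dd q = (if snd q = {} then 0 else if card (snd q) = 2 then 1 else 2)"

definition hh :: "('v set \<times> 'e set \<Rightarrow> nat) \<Rightarrow> 'v set \<times> 'e set \<Rightarrow> (nat \<Rightarrow> real) \<Rightarrow> nat \<Rightarrow> real" where
  "hh \<iota> q = (if snd q = {} then (\<lambda>x. dl (\<iota> q))
     else if card (snd q) = 2 then (let f = SOME f. f \<in> snd q in edgeh (\<iota> (vf (src f))) (\<iota> q) (\<iota> (vf (tgt f))))
     else coneh (2 * fst (cyc q)) (\<iota> q) (Pk (\<lambda>j. \<iota> (vf (fst (snd (cyc q)) j))) (\<lambda>j. \<iota> (ef (snd (snd (cyc q)) j)))))"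

lemma bs_sym_img: "bs b mm a ` {-1..1} = bs a mm b ` {-1..1}" "bs b mm a ` {-1<..<1} = bs a mm b ` {-1<..<1}"
proof -
  have e: "bs b mm a = (\<lambda>u. bs a mm b (-u))" by (rule ext) (simp add: bs_neg)
  have "uminus ` {-1..1::real} = {-1..1}" by simp
  moreover have "uminus ` {-1<..<1::real} = {-1<..<1}" by simp
  ultimately show "bs b mm a ` {-1..1} = bs a mm b ` {-1..1}" "bs b mm a ` {-1<..<1} = bs a mm b ` {-1<..<1}"
    unfolding e by (metis image_image)+
qed

lemma open_disc_ne: "open_disc d \<noteq> {}"
proof -
  have "(\<lambda>_. 0) \<in> open_disc d" by (simp add: open_disc_def topspace_Euclidean_space)
  then show ?thesis by auto
qed

lemma vf_ne_ef: "vf v \<noteq> ef e" by (simp add: vf_def ef_def)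

lemma ef_card: "e \<in> E \<Longrightarrow> card (snd (ef e)) = 2"
proof -
  assume "e \<in> E"
  then have "rv e \<noteq> e" using G[of e] by metis
  then show ?thesis by (simp add: ef_def)
qed

lemma edge_disc_ne: "{-1<..<1::real} \<noteq> {}" by (metis greaterThanLessThan_iff neg_less_0_iff_less
      zero_less_one empty_iff)

context
  fixes \<iota> :: "'v set \<times> 'e set \<Rightarrow> nat"
  assumes inj: "inj_on \<iota> SS"
begin

definition cc where "cc q = hh \<iota> q ` open_disc (dd q)"
definition KK where "KK q = hh \<iota> q ` closed_disc (dd q)"

lemma iota_eq: "p \<in> SS \<Longrightarrow> q \<in> SS \<Longrightarrow> \<iota> p = \<iota> q \<longleftrightarrow> p = q"
  using inj by (auto dest: inj_onD)

lemma vert_hh: "hh \<iota> (vf v) = (\<lambda>x. dl (\<iota> (vf v)))" "dd (vf v) = 0"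
  by (simp_all add: hh_def dd_def vf_def)

lemma vert_cells: "cc (vf v) = {dl (\<iota> (vf v))}" "KK (vf v) = {dl (\<iota> (vf v))}"
  by (simp_all add: cc_def KK_def vert_hh closed_disc_0 open_disc_0)

lemma vert_below: "p \<in> SS \<Longrightarrow> v \<in> V \<Longrightarrow> subgraph_le p (vf v) \<Longrightarrow> p = vf v"
proof -
  assume p: "p \<in> SS" and v: "v \<in> V" and le: "subgraph_le p (vf v)"
  then have sp: "snd p = {}" by (simp add: subgraph_le_def vf_def)
  from p show ?thesis
  proof (cases rule: S2_cases)
    case (V w) then show ?thesis using le by (auto simp: subgraph_le_def vf_def)
  next
    case (E e) then show ?thesis using sp by (simp add: ef_def)
  next
    case F2 then show ?thesis using sp F2_card(1)[of "fst p" "snd p"] by simp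
  qed
qed

lemma edge_hh:
  assumes e: "e \<in> E"
  obtains f where "f = e \<or> f = rv e" "hh \<iota> (ef e) = edgeh (\<iota> (vf (src f))) (\<iota> (ef e)) (\<iota> (vf (tgt f)))"
    "dd (ef e) = 1"
proof -
  define f where "f = (SOME f. f \<in> snd (ef e))"
  have "f \<in> snd (ef e)" unfolding f_def by (rule someI[of _ e]) (simp add: ef_def)
  then have "f = e \<or> f = rv e" by (simp add: ef_def)
  moreover have "snd (ef e) \<noteq> {}" by (simp add: ef_def)
  ultimately show ?thesis using that ef_card[OF e] unfolding hh_def dd_def f_def Let_def by auto
qed

lemma edge_idx:
  assumes e: "e \<in> E"
  shows "\<iota> (vf (src e)) \<noteq> \<iota> (ef e)" "\<iota> (vf (tgt e)) \<noteq> \<iota> (ef e)" "\<iota> (vf (src e)) \<noteq> \<iota> (vf (tgt e))"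
  using iota_eq[OF vf_S2 ef_S2[OF e]] iota_eq[OF vf_S2 vf_S2] G[OF e] vf_ne_ef
  by (auto simp: vf_def)

lemma edge_ok:
  assumes e: "e \<in> E"
  shows "dd (ef e) \<le> 2" "continuous_on (closed_disc (dd (ef e))) (hh \<iota> (ef e))"
    "inj_on (hh \<iota> (ef e)) (closed_disc (dd (ef e)))"
    "KK (ef e) = bs (\<iota> (vf (src e))) (\<iota> (ef e)) (\<iota> (vf (tgt e))) ` {-1..1}"
    "cc (ef e) = bs (\<iota> (vf (src e))) (\<iota> (ef e)) (\<iota> (vf (tgt e))) ` {-1<..<1}"
proof -
  obtain f where f: "f = e \<or> f = rv e" "hh \<iota> (ef e) = edgeh (\<iota> (vf (src f))) (\<iota> (ef e)) (\<iota> (vf (tgt f)))"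
    "dd (ef e) = 1" using edge_hh[OF e] by blast
  note Ge = G[OF e]
  note I = edge_idx[OF e]
  show "dd (ef e) \<le> 2" using f by simp
  show "continuous_on (closed_disc (dd (ef e))) (hh \<iota> (ef e))" using f(2) edgeh_cont by simp
  show "inj_on (hh \<iota> (ef e)) (closed_disc (dd (ef e)))"
    using f I Ge edgeh_inj by (auto simp: eq_commute)
  have K1: "KK (ef e) = bs (\<iota> (vf (src f))) (\<iota> (ef e)) (\<iota> (vf (tgt f))) ` {-1..1}"
    unfolding KK_def f(2) f(3) by (rule edgeh_closed)
  have c1: "cc (ef e) = bs (\<iota> (vf (src f))) (\<iota> (ef e)) (\<iota> (vf (tgt f))) ` {-1<..<1}"
    unfolding cc_def f(2) f(3) by (rule edgeh_open)
  show "KK (ef e) = bs (\<iota> (vf (src e))) (\<iota> (ef e)) (\<iota> (vf (tgt e))) ` {-1..1}"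
  proof (cases "f = e")
    case True then show ?thesis using K1 by simp
  next
    case False then have "f = rv e" using f(1) by simp
    then show ?thesis using K1 Ge bs_sym_img(1)[of "\<iota> (vf (tgt e))" "\<iota> (ef e)" "\<iota> (vf (src e))"] by simp
  qed
  show "cc (ef e) = bs (\<iota> (vf (src e))) (\<iota> (ef e)) (\<iota> (vf (tgt e))) ` {-1<..<1}"
  proof (cases "f = e")
    case True then show ?thesis using c1 by simp
  next
    case False then have "f = rv e" using f(1) by simp
    then show ?thesis using c1 Ge bs_sym_img(2)[of "\<iota> (vf (tgt e))" "\<iota> (ef e)" "\<iota> (vf (src e))"] by simp
  qed
qed

lemma edge_below:
  assumes e: "e \<in> E" and p: "p \<in> SS" and le: "subgraph_le p (ef e)"
  shows "p = vf (src e) \<or> p = vf (tgt e) \<or> p = ef e"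
  using p
proof (cases rule: S2_cases)
  case (V w) then show ?thesis using le by (auto simp: subgraph_le_def vf_def ef_def)
next
  case (E g)
  then have "g = e \<or> g = rv e" using le by (auto simp: subgraph_le_def ef_def)
  then show ?thesis using E ef_rv[OF e] by auto
next
  case F2
  have "snd p \<subseteq> {e, rv e}" using le by (simp add: subgraph_le_def ef_def)
  then have "card (snd p) \<le> card {e, rv e}" by (intro card_mono) auto
  also have "\<dots> \<le> 2" by (simp add: card_insert_if)
  finally show ?thesis using F2_card(2)[of "fst p" "snd p"] F2 by simp
qed

lemma edge_set: "e \<in> E \<Longrightarrow> {p. p \<in> SS \<and> subgraph_le p (ef e)} = {vf (src e), vf (tgt e), ef e}"
  using edge_below vf_S2 ef_S2 G[of e] by (auto simp: subgraph_le_def vf_def ef_def)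

lemma edge_Kun: "e \<in> E \<Longrightarrow> KK (ef e) = \<Union>{cc p | p. p \<in> SS \<and> subgraph_le p (ef e)}"
proof -
  assume e: "e \<in> E"
  have "\<Union>{cc p | p. p \<in> SS \<and> subgraph_le p (ef e)} = \<Union>(cc ` {p. p \<in> SS \<and> subgraph_le p (ef e)})" by blast
  also have "\<dots> = cc (vf (src e)) \<union> cc (vf (tgt e)) \<union> cc (ef e)" unfolding edge_set[OF e] by auto
  also have "\<dots> = bs (\<iota> (vf (src e))) (\<iota> (ef e)) (\<iota> (vf (tgt e))) ` ({-1, 1} \<union> {-1<..<1})"
    unfolding vert_cells edge_ok(5)[OF e] by (auto simp: bs_ends)
  also have "{-1, 1} \<union> {-1<..<1} = {-1..1::real}" by auto
  finally show ?thesis using edge_ok(4)[OF e] by simp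
qed

lemma edge_supp:
  assumes e: "e \<in> E" and y: "y \<in> KK (ef e)" and yi: "y i \<noteq> 0"
  shows "i \<in> \<iota> ` {p \<in> SS. subgraph_le p (ef e)}"
proof -
  obtain u where "y = bs (\<iota> (vf (src e))) (\<iota> (ef e)) (\<iota> (vf (tgt e))) u" using y edge_ok(4)[OF e] by auto
  then have "i \<in> {\<iota> (vf (src e)), \<iota> (ef e), \<iota> (vf (tgt e))}" using bs_supp yi by metis
  then show ?thesis using edge_set[OF e] by auto
qed

lemma edge_pos:
  assumes e: "e \<in> E" and y: "y \<in> cc (ef e)"
  shows "y (\<iota> (ef e)) \<noteq> 0"
proof -
  obtain u where u: "u \<in> {-1<..<1}" "y = bs (\<iota> (vf (src e))) (\<iota> (ef e)) (\<iota> (vf (tgt e))) u"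
    using y edge_ok(5)[OF e] by auto
  have "y (\<iota> (ef e)) = 1 - \<bar>u\<bar>" using bs_mid edge_idx[OF e] u(2) by metis
  then show ?thesis using u(1) by auto
qed

lemma F2_data:
  assumes q2: "isF 2 q"
  obtains k ve ee where "cycprops (fst q) (snd q) k ve ee"
    "hh \<iota> q = coneh (2*k) (\<iota> q) (Pk (\<lambda>j. \<iota> (vf (ve j))) (\<lambda>j. \<iota> (ef (ee j))))" "dd q = 2"
proof -
  have "snd q \<noteq> {}" "card (snd q) \<noteq> 2" using F2_card[of "fst q" "snd q"] q2 by auto
  then show ?thesis using that cyc[OF q2] by (simp add: hh_def dd_def)
qed

lemma cyc_facts:
  assumes q2: "isF 2 (W, F)" and c: "cycprops W F k ve ee"
  shows "k \<ge> 2" "\<And>n. ee n \<in> F" "\<And>n. ee n \<in> E" "\<And>n. ve n \<in> W" "\<And>n. ve n \<in> V"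
    "\<And>n. src (ee n) = ve n" "\<And>n. tgt (ee n) = ve (Suc n)" "\<And>n. ve (n mod k) = ve n"
    "inj_on ve {..<k}" "inj_on ee {..<k}" "W = ve ` {..<k}" "F = ee ` {..<k} \<union> rv ` ee ` {..<k}"
    "\<And>i j. rv (ee i) \<noteq> ee j"
proof -
  note D = isF_D[OF q2]
  show k: "k \<ge> 2" and eF: "\<And>n. ee n \<in> F" and "\<And>n. src (ee n) = ve n" "\<And>n. tgt (ee n) = ve (Suc n)"
    and "\<And>n. ve (n mod k) = ve n" "inj_on ve {..<k}" "inj_on ee {..<k}" and W: "W = ve ` {..<k}"
    and "F = ee ` {..<k} \<union> rv ` ee ` {..<k}" "\<And>i j. rv (ee i) \<noteq> ee j"
    using c by (auto simp: cycprops_def)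
  show "\<And>n. ee n \<in> E" using eF D(2) by auto
  show vW: "\<And>n. ve n \<in> W"
  proof -
    fix n
    have "src (ee n) = ve n" using c by (simp add: cycprops_def)
    then show "ve n \<in> W" using D(3)[OF eF[of n]] by simp
  qed
  show "\<And>n. ve n \<in> V" using vW D(1) by auto
qed

lemma F2_idx:
  assumes q2: "isF 2 (W, F)" and c: "cycprops W F k ve ee"
  shows "inj_on (Pk (\<lambda>j. \<iota> (vf (ve j))) (\<lambda>j. \<iota> (ef (ee j)))) {..<2*k}"
    "\<iota> (W, F) \<notin> Pk (\<lambda>j. \<iota> (vf (ve j))) (\<lambda>j. \<iota> (ef (ee j))) ` {..<2*k}"
proof -
  note C = cyc_facts[OF q2 c]
  have vS: "vf (ve j) \<in> SS" for j using vf_S2 C(5) by blast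
  have eS: "ef (ee j) \<in> SS" for j using ef_S2 C(3) by blast
  have qS: "(W, F) \<in> SS" using F2_S2[OF q2] .
  show "inj_on (Pk (\<lambda>j. \<iota> (vf (ve j))) (\<lambda>j. \<iota> (ef (ee j)))) {..<2*k}"
  proof (rule inj_onI)
    fix n n' assume n: "n \<in> {..<2*k}" "n' \<in> {..<2*k}"
      and eq: "Pk (\<lambda>j. \<iota> (vf (ve j))) (\<lambda>j. \<iota> (ef (ee j))) n = Pk (\<lambda>j. \<iota> (vf (ve j))) (\<lambda>j. \<iota> (ef (ee j))) n'"
    have nk: "n div 2 < k" "n' div 2 < k" using n by auto
    show "n = n'"
    proof (cases "even n"; cases "even n'")
      assume ev: "even n" "even n'"
      then have "vf (ve (n div 2)) = vf (ve (n' div 2))" using eq iota_eq[OF vS vS] by (simp add: Pk_def)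
      then have "ve (n div 2) = ve (n' div 2)" by (simp add: vf_def)
      then have "n div 2 = n' div 2" using inj_onD[OF C(9)] nk by simp
      then show ?thesis using ev by (metis dvd_mult_div_cancel)
    next
      assume ev: "even n" "odd n'"
      then show ?thesis using eq iota_eq[OF vS eS] vf_ne_ef by (simp add: Pk_def)
    next
      assume ev: "odd n" "even n'"
      then show ?thesis using eq iota_eq[OF eS vS] vf_ne_ef by (simp add: Pk_def) (metis vf_ne_ef)
    next
      assume ev: "odd n" "odd n'"
      then have "ef (ee (n div 2)) = ef (ee (n' div 2))" using eq iota_eq[OF eS eS] by (simp add: Pk_def)
      then have "{ee (n div 2), rv (ee (n div 2))} = {ee (n' div 2), rv (ee (n' div 2))}" by (simp add: ef_def)
      then have "ee (n div 2) = ee (n' div 2)" using C(13) by (metis doubleton_eq_iff)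
      then have "n div 2 = n' div 2" using inj_onD[OF C(10)] nk by simp
      then show ?thesis using ev by (metis odd_two_times_div_two_succ)
    qed
  qed
  show "\<iota> (W, F) \<notin> Pk (\<lambda>j. \<iota> (vf (ve j))) (\<lambda>j. \<iota> (ef (ee j))) ` {..<2*k}"
  proof
    assume "\<iota> (W, F) \<in> Pk (\<lambda>j. \<iota> (vf (ve j))) (\<lambda>j. \<iota> (ef (ee j))) ` {..<2*k}"
    then obtain n where "\<iota> (W, F) = Pk (\<lambda>j. \<iota> (vf (ve j))) (\<lambda>j. \<iota> (ef (ee j))) n" by auto
    then have "(W, F) = vf (ve (n div 2)) \<or> (W, F) = ef (ee (n div 2))"
      using iota_eq[OF qS vS] iota_eq[OF qS eS] by (auto simp: Pk_def split: if_splits)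
    then show False using F2_card(1)[OF q2] F2_card(4)[OF q2] by (auto simp: vf_def ef_def)
  qed
qed

lemma F2_set:
  assumes q2: "isF 2 (W, F)" and c: "cycprops W F k ve ee"
  shows "{p. p \<in> SS \<and> subgraph_le p (W, F)} = {(W, F)} \<union> (\<Union>j<k. {p. p \<in> SS \<and> subgraph_le p (ef (ee j))})"
proof -
  note C = cyc_facts[OF q2 c]
  note D = isF_D[OF q2]
  have efle: "subgraph_le (ef (ee j)) (W, F)" for j
    using D(3)[OF C(2)] D(4)[OF C(2)] D(5)[OF C(2)] C(2) by (simp add: subgraph_le_def ef_def)
  show ?thesis
  proof
    show "{p. p \<in> SS \<and> subgraph_le p (W, F)} \<subseteq> {(W, F)} \<union> (\<Union>j<k. {p. p \<in> SS \<and> subgraph_le p (ef (ee j))})"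
    proof
      fix p assume "p \<in> {p. p \<in> SS \<and> subgraph_le p (W, F)}"
      then have p: "p \<in> SS" and le: "subgraph_le p (W, F)" by auto
      from p show "p \<in> {(W, F)} \<union> (\<Union>j<k. {p. p \<in> SS \<and> subgraph_le p (ef (ee j))})"
      proof (cases rule: S2_cases)
        case (V w)
        then have "w \<in> W" using le by (simp add: subgraph_le_def vf_def)
        then obtain j where j: "j < k" "w = ve j" using C(11) by auto
        then have "subgraph_le p (ef (ee j))" using V C(6) by (simp add: subgraph_le_def vf_def ef_def)
        then show ?thesis using j p by blast
      next
        case (E g)
        then have "g \<in> F" using le by (simp add: subgraph_le_def ef_def)
        then obtain j where j: "j < k" "g = ee j \<or> g = rv (ee j)" using C(12) by auto
        then have "p = ef (ee j)" using E ef_rv[OF C(3)] by auto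
        then show ?thesis using j p by (auto simp: subgraph_le_def)
      next
        case F2
        then have "fst p = W \<and> snd p = F" using face2_sub[OF q2 c, of "fst p" "snd p"] le by (simp add: subgraph_le_def)
        then have "p = (W, F)" by (metis prod.collapse)
        then show ?thesis by simp
      qed
    qed
    show "{(W, F)} \<union> (\<Union>j<k. {p. p \<in> SS \<and> subgraph_le p (ef (ee j))}) \<subseteq> {p. p \<in> SS \<and> subgraph_le p (W, F)}"
      using F2_S2[OF q2] efle unfolding subgraph_le_def by blast
  qed
qed

lemma F2_all:
  assumes q2: "isF 2 (W, F)"
  shows "dd (W, F) \<le> 2" "continuous_on (closed_disc (dd (W, F))) (hh \<iota> (W, F))"
    "inj_on (hh \<iota> (W, F)) (closed_disc (dd (W, F)))"
    "KK (W, F) = \<Union>{cc p | p. p \<in> SS \<and> subgraph_le p (W, F)}"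
    "\<And>y i. y \<in> KK (W, F) \<Longrightarrow> y i \<noteq> 0 \<Longrightarrow> i \<in> \<iota> ` {p \<in> SS. subgraph_le p (W, F)}"
    "\<And>y. y \<in> cc (W, F) \<Longrightarrow> y (\<iota> (W, F)) \<noteq> 0"
proof -
  obtain k ve ee where c: "cycprops W F k ve ee"
    and h: "hh \<iota> (W, F) = coneh (2*k) (\<iota> (W, F)) (Pk (\<lambda>j. \<iota> (vf (ve j))) (\<lambda>j. \<iota> (ef (ee j))))"
    and d: "dd (W, F) = 2" using F2_data[OF q2] by auto
  note C = cyc_facts[OF q2 c]
  note I = F2_idx[OF q2 c]
  define P where "P = Pk (\<lambda>j. \<iota> (vf (ve j))) (\<lambda>j. \<iota> (ef (ee j)))"
  define ap where "ap = \<iota> (W, F)"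
  have m3: "2 * k \<ge> 3" using C(1) by simp
  show "dd (W, F) \<le> 2" using d by simp
  show "continuous_on (closed_disc (dd (W, F))) (hh \<iota> (W, F))" using h coneh_cont by simp
  show "inj_on (hh \<iota> (W, F)) (closed_disc (dd (W, F)))" using h d coneh_inj[OF m3 I] by simp
  have K: "KK (W, F) = {Fq (2*k) ap P r n t | r n t. 0 \<le> r \<and> r \<le> 1 \<and> n < 2*k \<and> 0 \<le> t \<and> t < 1}"
    unfolding KK_def h d P_def ap_def by (rule coneh_closed_image[OF m3])
  have c1: "cc (W, F) = {Fq (2*k) ap P r n t | r n t. 0 \<le> r \<and> r < 1 \<and> n < 2*k \<and> 0 \<le> t \<and> t < 1}"
    unfolding cc_def h d P_def ap_def by (rule coneh_open_image[OF m3])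
  have efle: "subgraph_le (ef (ee j)) (W, F)" for j
    using isF_D(3,4,5)[OF q2, OF C(2)] C(2) by (simp add: subgraph_le_def ef_def)
  have Pin: "P n \<in> \<iota> ` {p \<in> SS. subgraph_le p (W, F)}" for n
  proof (cases "even n")
    case True
    have "vf (ve (n div 2)) \<in> {p \<in> SS. subgraph_le p (W, F)}"
      using vf_S2[OF C(5)] C(4) by (simp add: subgraph_le_def vf_def)
    then show ?thesis using True by (simp add: P_def Pk_def)
  next
    case False
    have "ef (ee (n div 2)) \<in> {p \<in> SS. subgraph_le p (W, F)}"
      using ef_S2[OF C(3)] efle by simp
    then show ?thesis using False by (simp add: P_def Pk_def)
  qed
  have apin: "ap \<in> \<iota> ` {p \<in> SS. subgraph_le p (W, F)}"
    using F2_S2[OF q2] by (auto simp: ap_def subgraph_le_def)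
  show "\<And>y i. y \<in> KK (W, F) \<Longrightarrow> y i \<noteq> 0 \<Longrightarrow> i \<in> \<iota> ` {p \<in> SS. subgraph_le p (W, F)}"
  proof -
    fix y i assume y: "y \<in> KK (W, F)" and yi: "y i \<noteq> 0"
    then obtain r n t where "y = Fq (2*k) ap P r n t" using K by auto
    then have "i = ap \<or> i = P n \<or> i = P (Suc n mod (2*k))" using Fq_supp yi by metis
    then show "i \<in> \<iota> ` {p \<in> SS. subgraph_le p (W, F)}" using Pin apin by auto
  qed
  show "\<And>y. y \<in> cc (W, F) \<Longrightarrow> y (\<iota> (W, F)) \<noteq> 0"
  proof -
    fix y assume "y \<in> cc (W, F)"
    then obtain r n t where rnt: "r < 1" "n < 2*k" "y = Fq (2*k) ap P r n t" using c1 by auto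
    have "y ap = 1 - r" using Fq_apex[OF I(2)[folded P_def ap_def] rnt(2)] rnt(3) by simp
    then show "y (\<iota> (W, F)) \<noteq> 0" using rnt(1) by (simp add: ap_def)
  qed
  have L: "{Fq (2*k) ap P 1 n t | n t. n < 2*k \<and> 0 \<le> t \<and> t < 1}
       = (\<Union>j<k. KK (ef (ee j)))"
  proof -
    have "KK (ef (ee j)) = bs (\<iota> (vf (ve j))) (\<iota> (ef (ee j))) (\<iota> (vf (ve (Suc j mod k)))) ` {-1..1}" for j
      using edge_ok(4)[OF C(3)] C(6,7,8) by simp
    then show ?thesis unfolding P_def using loop_eq[OF C(1)] by simp
  qed
  have "KK (W, F) = cc (W, F) \<union> {Fq (2*k) ap P 1 n t | n t. n < 2*k \<and> 0 \<le> t \<and> t < 1}"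
    unfolding K c1 by (rule split_r)
  also have "\<dots> = cc (W, F) \<union> (\<Union>j<k. \<Union>{cc p | p. p \<in> SS \<and> subgraph_le p (ef (ee j))})"
    unfolding L using edge_Kun[OF C(3)] by simp
  also have "\<dots> = \<Union>(cc ` ({(W, F)} \<union> (\<Union>j<k. {p. p \<in> SS \<and> subgraph_le p (ef (ee j))})))"
    by blast
  also have "\<dots> = \<Union>{cc p | p. p \<in> SS \<and> subgraph_le p (W, F)}"
    unfolding F2_set[OF q2 c, symmetric] by blast
  finally show "KK (W, F) = \<Union>{cc p | p. p \<in> SS \<and> subgraph_le p (W, F)}" .
qed

lemma cell_props_all:
  assumes q: "q \<in> SS"
  shows "dd q \<le> 2 \<and> continuous_on (closed_disc (dd q)) (hh \<iota> q) \<and>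
    inj_on (hh \<iota> q) (closed_disc (dd q)) \<and>
    KK q = \<Union>{cc p | p. p \<in> SS \<and> subgraph_le p q} \<and>
    (\<forall>y i. y \<in> KK q \<longrightarrow> y i \<noteq> 0 \<longrightarrow> i \<in> \<iota> ` {p \<in> SS. subgraph_le p q}) \<and>
    (\<forall>y. y \<in> cc q \<longrightarrow> y (\<iota> q) \<noteq> 0)"
  using q
proof (cases rule: S2_cases)
  case (V v)
  have set: "{p. p \<in> SS \<and> subgraph_le p q} = {q}"
    using vert_below[OF _ V(1)] vf_S2[OF V(1)] V(2) by (auto simp: subgraph_le_def)
  have 1: "dd q \<le> 2" using V vert_hh by simp
  have 2: "continuous_on (closed_disc (dd q)) (hh \<iota> q)" using V vert_hh by (simp add: continuous_on_const)
  have 3: "inj_on (hh \<iota> q) (closed_disc (dd q))" using V vert_hh by (simp add: closed_disc_0)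
  have 4: "KK q = \<Union>{cc p | p. p \<in> SS \<and> subgraph_le p q}"
  proof -
    have "\<Union>{cc p | p. p \<in> SS \<and> subgraph_le p q} = \<Union>(cc ` {p. p \<in> SS \<and> subgraph_le p q})" by blast
    then show ?thesis unfolding set using V vert_cells by simp
  qed
  have 5: "\<forall>y i. y \<in> KK q \<longrightarrow> y i \<noteq> 0 \<longrightarrow> i \<in> \<iota> ` {p \<in> SS. subgraph_le p q}"
    using V vert_cells set by (auto simp: dl_def split: if_splits)
  have 6: "\<forall>y. y \<in> cc q \<longrightarrow> y (\<iota> q) \<noteq> 0"
    using V vert_cells by (simp add: dl_def)
  show ?thesis using 1 2 3 4 5 6 by blast
next
  case (E e)
  show ?thesis
    using edge_ok[OF E(1)] edge_Kun[OF E(1)] edge_supp[OF E(1)] edge_pos[OF E(1)] E(2) by simp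
next
  case F2
  then have q2: "isF 2 (fst q, snd q)" by simp
  show ?thesis using F2_all[OF q2] by simp
qed

lemma cell_props:
  assumes q: "q \<in> SS"
  shows "dd q \<le> 2" "continuous_on (closed_disc (dd q)) (hh \<iota> q)"
    "inj_on (hh \<iota> q) (closed_disc (dd q))"
    "KK q = \<Union>{cc p | p. p \<in> SS \<and> subgraph_le p q}"
    "\<And>y i. y \<in> KK q \<Longrightarrow> y i \<noteq> 0 \<Longrightarrow> i \<in> \<iota> ` {p \<in> SS. subgraph_le p q}"
    "\<And>y. y \<in> cc q \<Longrightarrow> y (\<iota> q) \<noteq> 0"
  using cell_props_all[OF q] by blast+

lemma is_CW: "finite SS \<Longrightarrow> is_cell_poset_of_regular_CW SS subgraph_le"
proof -
  assume fin: "finite SS"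
  note DC = disc_cell[OF cell_props(1) cell_props(2) cell_props(3)]
  show ?thesis
  proof (rule CW_from_cells[where d = dd and h = "hh \<iota>" and c = cc and K = KK and \<kappa> = \<iota>])
    show "finite SS" by (rule fin)
    show "inj_on \<iota> SS" by (rule inj)
    show "\<And>p q. subgraph_le p q \<Longrightarrow> subgraph_le q p \<Longrightarrow> p = q"
      by (auto simp: subgraph_le_def prod_eq_iff)
    show "\<And>p. p \<in> SS \<Longrightarrow> homeomorphic_map (subtopology (Euclidean_space (dd p)) (closed_disc (dd p))) (top_of_set (KK p)) (hh \<iota> p)"
      unfolding KK_def using DC(1) by blast
    show "\<And>p. p \<in> SS \<Longrightarrow> hh \<iota> p ` open_disc (dd p) = cc p" by (simp add: cc_def)
    show "\<And>p. p \<in> SS \<Longrightarrow> cc p \<subseteq> KK p" unfolding cc_def KK_def using DC(4) by blast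
    show "\<And>p. p \<in> SS \<Longrightarrow> KK p \<subseteq> closure (cc p)" unfolding cc_def KK_def using DC(2) by blast
    show "\<And>p. p \<in> SS \<Longrightarrow> compact (KK p)" unfolding KK_def using DC(3) by blast
    show "\<And>p. p \<in> SS \<Longrightarrow> KK p = \<Union>{cc q | q. q \<in> SS \<and> subgraph_le q p}" using cell_props(4) by blast
    show "\<And>p y i. p \<in> SS \<Longrightarrow> y \<in> KK p \<Longrightarrow> y i \<noteq> 0 \<Longrightarrow> i \<in> \<iota> ` {q \<in> SS. subgraph_le q p}"
      using cell_props(5) by blast
    show "\<And>p y. p \<in> SS \<Longrightarrow> y \<in> cc p \<Longrightarrow> y (\<iota> p) \<noteq> 0" using cell_props(6) by blast
    show "\<And>p. p \<in> SS \<Longrightarrow> cc p \<noteq> {}" using open_disc_ne by (simp add: cc_def)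
  qed
qed

end

end
theorem lemma2p7:
  fixes V :: "'v set" and E :: "'e set" and src tgt :: "'e \<Rightarrow> 'v" and rv :: "'e \<Rightarrow> 'e"
    and n :: nat and nabla :: "'e \<Rightarrow> 'e \<Rightarrow> 'e" and alpha :: "'e \<Rightarrow> ('k::finite \<Rightarrow> int)"
  assumes "abstract_gkm_graph V E src tgt rv n nabla alpha"
    and "gkm3 V E src alpha"
  shows "is_cell_poset_of_regular_CW (S2 V E src tgt rv nabla) subgraph_le"
proof -
  have A: "finite V" "finite E"
    "\<And>e. e \<in> E \<Longrightarrow> src e \<in> V \<and> tgt e \<in> V \<and> src e \<noteq> tgt e \<and> rv e \<in> E \<and> rv (rv e) = e
              \<and> src (rv e) = tgt e \<and> tgt (rv e) = src e"
    "\<And>e. e \<in> E \<Longrightarrow> nabla e e = rv e"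
    using assms(1) unfolding abstract_gkm_graph_def by blast+
  interpret gr V E src tgt rv nabla
    by (unfold_locales) (use A in blast)+
  have "SS \<subseteq> Pow V \<times> Pow E"
  proof
    fix q assume "q \<in> SS"
    then obtain i where "is_face V E src tgt rv nabla i q" by (auto simp: S2_def)
    then show "q \<in> Pow V \<times> Pow E" by (auto simp: is_face_def Let_def mem_Times_iff)
  qed
  then have fin: "finite SS" using A(1,2) by (meson finite_Pow_iff finite_SigmaI finite_subset)
  obtain \<iota> :: "'v set \<times> 'e set \<Rightarrow> nat" and N where "\<iota> ` SS = {i. i < N}" "inj_on \<iota> SS"
    using finite_imp_inj_to_nat_seg[OF fin] by blast
  then show ?thesis using is_CW[OF _ fin] by blast
qed

end
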